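(* Let $M,N\ge 0$. For every interval of rank two in the poset of shuffles $W_{MN}$, the labeling $\Lambda$ behaves in one of the following two ways. (1) If the interval is isomorphic to $C_2\times C_2$, then its two maximal chains $c_1,c_2$, with labels induced by $\Lambda$ (i.e., the labels of the two coverings in the interval, computed within any maximal chain of $W_{MN}$ containing the given rank-two subchain together with a fixed chain below and a fixed chain above the interval), satisfy $(l_1,l_2)$ for $c_1$ and $(l_2,l_1)$ for $c_2$, where $l_1\neq l_2$ are letters of $\mathcal{A}\cup\mathcal{X}$. (2) If the interval is isomorphic to $\Pi_3$, then its three maximal chains $\gamma_1,\gamma_2,\gamma_3$ have induced labels $(x_j,l)$, $(l,x_j)$ and $(x_j,x_j)$ respectively, for some $x_j\in\mathcal{X}$ and some $l\in\mathcal{A}\cup(\mathcal{X}\setminus\{x_j\})$.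
   Context: $C_2$ denotes the 2-element chain and $\Pi_3$ the lattice of set partitions of a 3-element set (a 5-element poset of rank two). Let $\mathcal{A}=\{a_1,\dots,a_M\}$ and $\mathcal{X}=\{x_1,\dots,x_N\}$ be disjoint sets. A shuffle word is a word (possibly empty) with distinct letters from $\mathcal{A}\cup\mathcal{X}$ in which the letters of $\mathcal{A}$ appear in increasing order of subscripts and likewise those of $\mathcal{X}$. The poset of shuffles $W_{MN}$ consists of all shuffle words ordered by the reflexive-transitive closure of: $w\lessdot w'$ iff $w'$ is obtained from $w$ by deleting a letter of $\mathcal{A}$ or inserting a letter of $\mathcal{X}$; $\hat0=a_1\cdots a_M$, $\hat1=x_1\cdots x_N$. For a maximal chain $c=(\hat0=w^0\lessdot\cdots\lessdot w^{M+N}=\hat1)$ define $\Lambda(c)=(\Lambda_1(c),\dots,\Lambda_{M+N}(c))$ by: (x) if $w^{i+1}$ is obtained from $w^i$ by inserting $x_k$, then $\Lambda_{i+1}(c)=x_k$; (xa) if $w^i=u\,x_k\,a_m\,v$ and $w^{i+1}=u\,x_k\,v$ and this is the first deletion along $c$, starting from $\hat0$, of a letter located immediately after $x_k$, then $\Lambda_{i+1}(c)=x_k$; (a) if $w^{i+1}$ is obtained by deleting $a_j\in\mathcal{A}$ and this is not of type (xa), then $\Lambda_{i+1}(c)=a_j$. *)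

theory Defs
  imports Main "HOL-Library.Disjoint_Sets"
begin

datatype letter = A nat | X nat

definition alphabet :: "nat \<Rightarrow> nat \<Rightarrow> letter set" where
  "alphabet M N = {A m | m. 1 \<le> m \<and> m \<le> M} \<union> {X k | k. 1 \<le> k \<and> k \<le> N}"

definition A_idx :: "letter list \<Rightarrow> nat list" where
  "A_idx w = concat (map (\<lambda>l. case l of A m \<Rightarrow> [m] | X _ \<Rightarrow> []) w)"

definition X_idx :: "letter list \<Rightarrow> nat list" where
  "X_idx w = concat (map (\<lambda>l. case l of X k \<Rightarrow> [k] | A _ \<Rightarrow> []) w)"

definition shuffle_word :: "nat \<Rightarrow> nat \<Rightarrow> letter list \<Rightarrow> bool" where
  "shuffle_word M N w \<longleftrightarrow> distinct w \<and> set w \<subseteq> alphabet M N \<and>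
     sorted_wrt (<) (A_idx w) \<and> sorted_wrt (<) (X_idx w)"

definition cov :: "nat \<Rightarrow> nat \<Rightarrow> letter list \<Rightarrow> letter list \<Rightarrow> bool" where
  "cov M N w w' \<longleftrightarrow> shuffle_word M N w \<and> shuffle_word M N w' \<and>
     ((\<exists>u v m. w = u @ A m # v \<and> w' = u @ v) \<or>
      (\<exists>u v k. w = u @ v \<and> w' = u @ X k # v))"

definition wle :: "nat \<Rightarrow> nat \<Rightarrow> letter list \<Rightarrow> letter list \<Rightarrow> bool" where
  "wle M N w w' \<longleftrightarrow> shuffle_word M N w \<and> (cov M N)\<^sup>*\<^sup>* w w'"

definition bottom :: "nat \<Rightarrow> letter list" where
  "bottom M = map A [1..<Suc M]"

definition top_word :: "nat \<Rightarrow> letter list" where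
  "top_word N = map X [1..<Suc N]"

definition chain_ft :: "nat \<Rightarrow> nat \<Rightarrow> letter list list \<Rightarrow> letter list \<Rightarrow> letter list \<Rightarrow> bool" where
  "chain_ft M N c a b \<longleftrightarrow> c \<noteq> [] \<and> hd c = a \<and> last c = b \<and>
     (\<forall>i. Suc i < length c \<longrightarrow> cov M N (c ! i) (c ! Suc i))"

definition maxchain :: "nat \<Rightarrow> nat \<Rightarrow> letter list list \<Rightarrow> bool" where
  "maxchain M N c \<longleftrightarrow> chain_ft M N c (bottom M) (top_word N)"

definition inserted :: "letter list \<Rightarrow> letter list \<Rightarrow> letter" where
  "inserted w w' = (THE l. l \<in> set w' \<and> l \<notin> set w)"

definition deleted :: "letter list \<Rightarrow> letter list \<Rightarrow> letter" where
  "deleted w w' = (THE l. l \<in> set w \<and> l \<notin> set w')"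

definition imm_after :: "letter list \<Rightarrow> nat \<Rightarrow> letter \<Rightarrow> bool" where
  "imm_after w k l \<longleftrightarrow> (\<exists>u v. w = u @ [X k, l] @ v)"

definition del_after :: "letter list list \<Rightarrow> nat \<Rightarrow> nat \<Rightarrow> bool" where
  "del_after c j k \<longleftrightarrow> length (c ! Suc j) < length (c ! j) \<and>
     imm_after (c ! j) k (deleted (c ! j) (c ! Suc j))"

text \<open>label c i is \<Lambda>_{i+1}(c), the label of the covering c!i \<lessdot> c!(i+1).\<close>
definition label :: "letter list list \<Rightarrow> nat \<Rightarrow> letter" where
  "label c i =
     (if length (c ! i) < length (c ! Suc i) then inserted (c ! i) (c ! Suc i)
      else if (\<exists>k. del_after c i k \<and> (\<forall>j<i. \<not> del_after c j k))
      then X (THE k. del_after c i k \<and> (\<forall>j<i. \<not> del_after c j k))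
      else deleted (c ! i) (c ! Suc i))"

definition rank_two :: "nat \<Rightarrow> nat \<Rightarrow> letter list \<Rightarrow> letter list \<Rightarrow> bool" where
  "rank_two M N u w \<longleftrightarrow> (\<exists>v. cov M N u v \<and> cov M N v w)"

definition interval :: "nat \<Rightarrow> nat \<Rightarrow> letter list \<Rightarrow> letter list \<Rightarrow> letter list set" where
  "interval M N u w = {v. wle M N u v \<and> wle M N v w}"

definition middles :: "nat \<Rightarrow> nat \<Rightarrow> letter list \<Rightarrow> letter list \<Rightarrow> letter list set" where
  "middles M N u w = {v. cov M N u v \<and> cov M N v w}"

text \<open>Induced labels of the maximal chain u \<lessdot> v \<lessdot> w of the interval, computed inside the maximal
  chain lo @ v # hi of W_MN (lo: chain from bottom to u, hi: chain from w to top).\<close>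
definition ind_labels :: "letter list list \<Rightarrow> letter list \<Rightarrow> letter list list \<Rightarrow> letter \<times> letter" where
  "ind_labels lo v hi = (label (lo @ v # hi) (length lo - 1), label (lo @ v # hi) (length lo))"

definition ord_iso :: "'a set \<Rightarrow> ('a \<Rightarrow> 'a \<Rightarrow> bool) \<Rightarrow> 'b set \<Rightarrow> ('b \<Rightarrow> 'b \<Rightarrow> bool) \<Rightarrow> bool" where
  "ord_iso I R J S \<longleftrightarrow> (\<exists>f. bij_betw f I J \<and> (\<forall>x\<in>I. \<forall>y\<in>I. R x y \<longleftrightarrow> S (f x) (f y)))"

definition C2xC2_le :: "bool \<times> bool \<Rightarrow> bool \<times> bool \<Rightarrow> bool" where
  "C2xC2_le p q \<longleftrightarrow> fst p \<le> fst q \<and> snd p \<le> snd q"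

definition Pi3 :: "nat set set set" where
  "Pi3 = {P. partition_on {0, 1, 2} P}"

definition refines :: "nat set set \<Rightarrow> nat set set \<Rightarrow> bool" where
  "refines P Q \<longleftrightarrow> (\<forall>p\<in>P. \<exists>q\<in>Q. p \<subseteq> q)"

end

theory Submission
  imports Defs
begin

lemma sub012: "B \<subseteq> {0,1,2::nat} \<Longrightarrow> B \<in> {{},{0},{1},{2},{0,1},{0,2},{1,2},{0,1,2}}"
proof -
  assume "B \<subseteq> {0,1,2::nat}"
  then have "B \<in> Pow {0,1,2}" by simp
  also have "Pow {0,1,2::nat} = {{},{0},{1},{2},{0,1},{0,2},{1,2},{0,1,2}}"
    by (simp add: Pow_insert insert_commute)
  finally show ?thesis .
qed

lemma fin3: "B0 = {0::nat} \<union> (if a then {1} else {}) \<union> (if b then {2} else {}) \<Longrightarrow>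
  B1 = (if a then {0} else {}) \<union> {1} \<union> (if c then {2} else {}) \<Longrightarrow>
  B2 = (if b then {0} else {}) \<union> (if c then {1} else {}) \<union> {2} \<Longrightarrow>
  (a \<Longrightarrow> b \<Longrightarrow> c) \<Longrightarrow> (a \<Longrightarrow> c \<Longrightarrow> b) \<Longrightarrow> (b \<Longrightarrow> c \<Longrightarrow> a) \<Longrightarrow>
  {B0,B1,B2} \<in> {{{0},{1},{2}}, {{0,1},{2}}, {{0,2},{1}}, {{1,2},{0}}, {{0,1,2}}}"
  by (cases a; cases b; cases c) (simp_all add: insert_commute)

lemma Pi3_eq: "Pi3 = {{{0},{1},{2}}, {{0,1},{2}}, {{0,2},{1}}, {{1,2},{0}}, {{0,1,2}}}"
proof
  show "{{{0},{1},{2}}, {{0,1},{2}}, {{0,2},{1}}, {{1,2},{0}}, {{0,1,2}}} \<subseteq> Pi3"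
    unfolding Pi3_def by (auto simp: partition_on_def disjoint_def)
next
  show "Pi3 \<subseteq> {{{0},{1},{2}}, {{0,1},{2}}, {{0,2},{1}}, {{1,2},{0}}, {{0,1,2}}}"
  proof
    fix P assume "P \<in> Pi3"
    then have p: "partition_on {0,1,2} P" by (simp add: Pi3_def)
    then have U: "\<Union>P = {0,1,2}" and D: "disjoint P" and E: "{} \<notin> P"
      by (auto simp: partition_on_def)
    obtain B0 where b0: "B0 \<in> P" "0 \<in> B0" using U by blast
    obtain B1 where b1: "B1 \<in> P" "1 \<in> B1" using U by blast
    obtain B2 where b2: "B2 \<in> P" "2 \<in> B2" using U by blast
    have same: "\<And>B C i. B \<in> P \<Longrightarrow> C \<in> P \<Longrightarrow> i \<in> B \<Longrightarrow> i \<in> C \<Longrightarrow> B = C"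
      using D by (auto simp: disjoint_def)
    have PB: "P = {B0,B1,B2}"
    proof
      show "P \<subseteq> {B0,B1,B2}"
      proof
        fix B assume "B \<in> P"
        with E obtain i where "i \<in> B" by (metis all_not_in_conv)
        with \<open>B \<in> P\<close> U have "i \<in> {0,1,2}" by blast
        then show "B \<in> {B0,B1,B2}" using same[OF \<open>B\<in>P\<close> b0(1)] same[OF \<open>B\<in>P\<close> b1(1)]
          same[OF \<open>B\<in>P\<close> b2(1)] \<open>i\<in>B\<close> b0 b1 b2 by auto
      qed
    qed (use b0 b1 b2 in auto)
    have s0: "B0 \<subseteq> {0,1,2}" and s1: "B1 \<subseteq> {0,1,2}" and s2: "B2 \<subseteq> {0,1,2}"
      using U b0(1) b1(1) b2(1) by (metis Union_upper)+
    have ex: "\<And>B. B \<subseteq> {0,1,2::nat} \<Longrightarrow> B = (if 0 \<in> B then {0} else {}) \<union> (if 1 \<in> B then {1} else {}) \<union> (if 2 \<in> B then {2} else {})"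
      by auto
    have e01: "1 \<in> B0 \<Longrightarrow> B0 = B1" and e02: "2 \<in> B0 \<Longrightarrow> B0 = B2" and e12: "2 \<in> B1 \<Longrightarrow> B1 = B2"
      and f01: "0 \<in> B1 \<Longrightarrow> B0 = B1" and f02: "0 \<in> B2 \<Longrightarrow> B0 = B2" and f12: "1 \<in> B2 \<Longrightarrow> B1 = B2"
      using same[OF b0(1) b1(1)] same[OF b0(1) b2(1)] same[OF b1(1) b2(1)] b0 b1 b2 by auto
    have B0e: "B0 = {0} \<union> (if 1 \<in> B0 then {1} else {}) \<union> (if 2 \<in> B0 then {2} else {})"
      using ex[OF s0] b0(2) by simp
    have B1e: "B1 = (if 1 \<in> B0 then {0} else {}) \<union> {1} \<union> (if 2 \<in> B1 then {2} else {})"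
    proof -
      have "0 \<in> B1 \<longleftrightarrow> 1 \<in> B0" using e01 f01 b0(2) b1(2) by blast
      then show ?thesis using ex[OF s1] b1(2) by simp
    qed
    have B2e: "B2 = (if 2 \<in> B0 then {0} else {}) \<union> (if 2 \<in> B1 then {1} else {}) \<union> {2}"
    proof -
      have "0 \<in> B2 \<longleftrightarrow> 2 \<in> B0" using e02 f02 b0(2) b2(2) by blast
      moreover have "1 \<in> B2 \<longleftrightarrow> 2 \<in> B1" using e12 f12 b1(2) b2(2) by blast
      ultimately show ?thesis using ex[OF s2] b2(2) by simp
    qed
    have t: "1 \<in> B0 \<Longrightarrow> 2 \<in> B0 \<Longrightarrow> 2 \<in> B1" "1 \<in> B0 \<Longrightarrow> 2 \<in> B1 \<Longrightarrow> 2 \<in> B0"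
      "2 \<in> B0 \<Longrightarrow> 2 \<in> B1 \<Longrightarrow> 1 \<in> B0"
      using e01 e02 e12 b1(2) b0(2) by auto
    show "P \<in> {{{0},{1},{2}}, {{0,1},{2}}, {{0,2},{1}}, {{1,2},{0}}, {{0,1,2}}}"
      unfolding PB using fin3[OF B0e B1e B2e t] .
  qed
qed
lemma A_idx_alt: "A_idx x = map (\<lambda>l. case l of A m \<Rightarrow> m | X k \<Rightarrow> 0) (filter (\<lambda>l. case l of A _ \<Rightarrow> True | X _ \<Rightarrow> False) x)"
  by (induction x) (auto simp: A_idx_def split: letter.splits)

lemma X_idx_alt: "X_idx x = map (\<lambda>l. case l of X m \<Rightarrow> m | A k \<Rightarrow> 0) (filter (\<lambda>l. case l of X _ \<Rightarrow> True | A _ \<Rightarrow> False) x)"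
  by (induction x) (auto simp: X_idx_def split: letter.splits)

lemma sw_f: "sorted_wrt R (filter Q xs) \<Longrightarrow> sorted_wrt R (filter Q (filter P xs))"
proof -
  have "filter Q (filter P xs) = filter P (filter Q xs)" by (simp add: filter_filter conj_commute)
  then show "sorted_wrt R (filter Q xs) \<Longrightarrow> sorted_wrt R (filter Q (filter P xs))" by (metis sorted_wrt_filter)
qed

lemma sw_filter: "shuffle_word M N x \<Longrightarrow> shuffle_word M N (filter P x)"
  unfolding shuffle_word_def A_idx_alt X_idx_alt
  by (auto simp: sorted_wrt_map simp del: filter_filter intro: sw_f)

lemma sw_distinct: "shuffle_word M N x \<Longrightarrow> distinct x"
  by (simp add: shuffle_word_def)

lemma removeAll_mid: "distinct (u @ a # v) \<Longrightarrow> removeAll a (u @ a # v) = u @ v"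
  by (simp add: removeAll_id)

lemma cov_char: "cov M N x y \<longleftrightarrow> shuffle_word M N x \<and> shuffle_word M N y \<and>
   ((\<exists>m. A m \<in> set x \<and> y = removeAll (A m) x) \<or> (\<exists>k. X k \<in> set y \<and> x = removeAll (X k) y))"
proof
  assume c: "cov M N x y"
  then have sx: "shuffle_word M N x" and sy: "shuffle_word M N y" by (auto simp: cov_def)
  from c sx sy show "shuffle_word M N x \<and> shuffle_word M N y \<and>
   ((\<exists>m. A m \<in> set x \<and> y = removeAll (A m) x) \<or> (\<exists>k. X k \<in> set y \<and> x = removeAll (X k) y))"
  proof -
    have dx: "distinct x" and dy: "distinct y" using sx sy sw_distinct by auto
    from c have "(\<exists>u v m. x = u @ A m # v \<and> y = u @ v) \<or> (\<exists>u v k. x = u @ v \<and> y = u @ X k # v)"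
      by (simp add: cov_def)
    then have "(\<exists>m. A m \<in> set x \<and> y = removeAll (A m) x) \<or> (\<exists>k. X k \<in> set y \<and> x = removeAll (X k) y)"
    proof (elim disjE exE conjE)
      fix u v m assume "x = u @ A m # v" "y = u @ v"
      then show ?thesis using removeAll_mid[of u "A m" v] dx by auto
    next
      fix u v k assume "x = u @ v" "y = u @ X k # v"
      then show ?thesis using removeAll_mid[of u "X k" v] dy by auto
    qed
    then show ?thesis using sx sy by blast
  qed
next
  assume h: "shuffle_word M N x \<and> shuffle_word M N y \<and>
   ((\<exists>m. A m \<in> set x \<and> y = removeAll (A m) x) \<or> (\<exists>k. X k \<in> set y \<and> x = removeAll (X k) y))"
  then have dx: "distinct x" and dy: "distinct y" using sw_distinct by auto
  from h show "cov M N x y"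
  proof (elim conjE disjE exE)
    fix m assume "A m \<in> set x" "y = removeAll (A m) x"
    then obtain p q where "x = p @ A m # q" by (metis in_set_conv_decomp)
    with dx \<open>y = _\<close> have "y = p @ q" using removeAll_mid by simp
    then show ?thesis using h \<open>x = _\<close> unfolding cov_def by blast
  next
    fix k assume "X k \<in> set y" "x = removeAll (X k) y"
    then obtain p q where "y = p @ X k # q" by (metis in_set_conv_decomp)
    with dy \<open>x = _\<close> have "x = p @ q" using removeAll_mid by simp
    then show ?thesis using h \<open>y = _\<close> unfolding cov_def by blast
  qed
qed

definition isX :: "letter \<Rightarrow> bool" where "isX l = (case l of X _ \<Rightarrow> True | A _ \<Rightarrow> False)"

definition rk :: "letter list \<Rightarrow> int" where
  "rk x = int (length (filter isX x)) - int (length (filter (\<lambda>l. \<not> isX l) x))"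

lemma rk_append[simp]: "rk (x @ y) = rk x + rk y"
  by (simp add: rk_def)

lemma rk_cons[simp]: "rk (a # x) = (if isX a then 1 else -1) + rk x"
  by (simp add: rk_def)

lemma cov_rk: "cov M N x y \<Longrightarrow> rk y = rk x + 1"
  unfolding cov_def by (auto simp: isX_def)

lemma rtr_rk: "(cov M N)\<^sup>*\<^sup>* x y \<Longrightarrow> rk x \<le> rk y \<and> (rk x = rk y \<longrightarrow> x = y)"
proof (induction rule: rtranclp_induct)
  case base then show ?case by simp
next
  case (step y z) then show ?case using cov_rk[OF step(2)] by auto
qed

lemma cov_sw: "cov M N x y \<Longrightarrow> shuffle_word M N x \<and> shuffle_word M N y"
  by (simp add: cov_def)

lemma rank_two_rk: "rank_two M N u w \<Longrightarrow> rk w = rk u + 2"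
  unfolding rank_two_def using cov_rk by fastforce

lemma wle_rk: "wle M N x y \<Longrightarrow> rk x \<le> rk y \<and> (rk x = rk y \<longrightarrow> x = y)"
  unfolding wle_def using rtr_rk by blast

lemma middles_rk: "v \<in> middles M N u w \<Longrightarrow> rk v = rk u + 1"
  unfolding middles_def using cov_rk by auto

lemma interval_eq:
  assumes "rank_two M N u w"
  shows "interval M N u w = {u, w} \<union> middles M N u w"
proof
  obtain v0 where c1: "cov M N u v0" and c2: "cov M N v0 w" using assms by (auto simp: rank_two_def)
  have su: "shuffle_word M N u" and sw: "shuffle_word M N w" using cov_sw c1 c2 by auto
  have rw: "rk w = rk u + 2" using rank_two_rk[OF assms] .
  show "interval M N u w \<subseteq> {u, w} \<union> middles M N u w"
  proof
    fix v assume "v \<in> interval M N u w"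
    then have a: "wle M N u v" and b: "wle M N v w" by (auto simp: interval_def)
    have r1: "rk u \<le> rk v" "rk u = rk v \<longrightarrow> u = v" using wle_rk[OF a] by auto
    have r2: "rk v \<le> rk w" "rk v = rk w \<longrightarrow> v = w" using wle_rk[OF b] by auto
    show "v \<in> {u, w} \<union> middles M N u w"
    proof (cases "rk v = rk u \<or> rk v = rk w")
      case True then show ?thesis using r1 r2 by auto
    next
      case False
      then have rv: "rk v = rk u + 1" using r1 r2 rw by auto
      have "cov M N u v"
        using a[unfolded wle_def]
      proof (elim conjE)
        assume "(cov M N)\<^sup>*\<^sup>* u v"
        then show ?thesis
      proof (cases rule: converse_rtranclpE)
        assume "u = v" then show ?thesis using False by simp
      next
        fix u' assume "cov M N u u'" "(cov M N)\<^sup>*\<^sup>* u' v"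
        moreover have "rk u' = rk u + 1" using cov_rk \<open>cov M N u u'\<close> by blast
        ultimately have "u' = v" using rtr_rk[of M N u' v] rv by auto
        then show ?thesis using \<open>cov M N u u'\<close> by simp
      qed
      qed
      moreover have "cov M N v w"
        using b[unfolded wle_def]
      proof (elim conjE)
        assume "(cov M N)\<^sup>*\<^sup>* v w"
        then have "v = w \<or> (\<exists>w'. (cov M N)\<^sup>*\<^sup>* v w' \<and> cov M N w' w)"
          by (metis rtranclp.cases)
        then show ?thesis
      proof (elim disjE exE conjE)
        assume "v = w" then show ?thesis using False by simp
      next
        fix w' assume "(cov M N)\<^sup>*\<^sup>* v w'" "cov M N w' w"
        moreover have "rk w = rk w' + 1" using cov_rk \<open>cov M N w' w\<close> by blast
        ultimately have "v = w'" using rtr_rk[of M N v w'] rv rw by auto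
        then show ?thesis using \<open>cov M N w' w\<close> by simp
      qed
      qed
      ultimately show ?thesis by (simp add: middles_def)
    qed
  qed
next
  obtain v0 where c1: "cov M N u v0" and c2: "cov M N v0 w" using assms by (auto simp: rank_two_def)
  have su: "shuffle_word M N u" and sw: "shuffle_word M N w" using cov_sw c1 c2 by auto
  have uw: "wle M N u w" using c1 c2 su unfolding wle_def by auto
  show "{u, w} \<union> middles M N u w \<subseteq> interval M N u w"
    using su sw uw cov_sw unfolding interval_def middles_def wle_def by auto
qed

lemma interval_rel:
  assumes "rank_two M N u w" "a \<in> interval M N u w" "b \<in> interval M N u w"
  shows "wle M N a b \<longleftrightarrow> (a = b \<or> a = u \<or> b = w)"
proof -
  have rw: "rk w = rk u + 2" using rank_two_rk[OF assms(1)] .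
  have ab: "a \<in> {u, w} \<union> middles M N u w" "b \<in> {u, w} \<union> middles M N u w"
    using assms interval_eq by auto
  show ?thesis
  proof
    assume "wle M N a b"
    then have "rk a \<le> rk b" "rk a = rk b \<longrightarrow> a = b" using wle_rk by auto
    then show "a = b \<or> a = u \<or> b = w" using ab middles_rk rw by auto
  next
    assume "a = b \<or> a = u \<or> b = w"
    then show "wle M N a b" using assms(2,3) unfolding interval_def wle_def
      by (auto intro: rtranclp_trans)
  qed
qed

lemma iso_gen:
  assumes "bij_betw f I J" "\<forall>a\<in>I. \<forall>b\<in>I. R a b \<longleftrightarrow> (a = b \<or> a = bt \<or> b = tp)"
    "\<forall>a\<in>J. \<forall>b\<in>J. S a b \<longleftrightarrow> (a = b \<or> a = f bt \<or> b = f tp)" "bt \<in> I" "tp \<in> I"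
  shows "ord_iso I R J S"
  unfolding ord_iso_def
proof (intro exI[of _ f] conjI ballI)
  show "bij_betw f I J" by fact
  fix x y assume "x \<in> I" "y \<in> I"
  have inj: "inj_on f I" using assms(1) bij_betw_def by blast
  have "f x \<in> J" "f y \<in> J" using assms(1) \<open>x\<in>I\<close> \<open>y\<in>I\<close> bij_betwE by blast+
  then show "R x y \<longleftrightarrow> S (f x) (f y)"
    using assms(2,3) \<open>x\<in>I\<close> \<open>y\<in>I\<close> inj_onD[OF inj] assms(4,5) by metis
qed

lemma neq_by: "x \<in> S \<Longrightarrow> x \<notin> T \<Longrightarrow> S \<noteq> T" by auto

lemma pdist: "distinct [{{0},{1},{2}}, {{0,1},{2}}, {{0,2},{1}}, {{1,2},{0}}, {{0,1,2::nat}}]"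
proof -
  have a: "{0::nat} \<noteq> {0,1}" "{0::nat} \<noteq> {0,2}" "{0::nat} \<noteq> {1,2}" "{0::nat} \<noteq> {0,1,2}"
    "{1::nat} \<noteq> {0,1}" "{1::nat} \<noteq> {0,2}" "{1::nat} \<noteq> {1,2}" "{1::nat} \<noteq> {0,1,2}"
    "{2::nat} \<noteq> {0,1}" "{2::nat} \<noteq> {0,2}" "{2::nat} \<noteq> {1,2}" "{2::nat} \<noteq> {0,1,2}"
    "{0::nat} \<noteq> {1}" "{0::nat} \<noteq> {2}" "{1::nat} \<noteq> {2}" "{1::nat} \<noteq> {0}" "{2::nat} \<noteq> {0}" "{2::nat} \<noteq> {1}"
    by auto
  have "{{0},{1},{2}} \<noteq> {{0,1},{2::nat}}" by (rule neq_by[of "{0}"]) (use a in simp_all)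
  moreover have "{{0},{1},{2}} \<noteq> {{0,2},{1::nat}}" by (rule neq_by[of "{0}"]) (use a in simp_all)
  moreover have "{{0},{1},{2}} \<noteq> {{1,2},{0::nat}}" by (rule neq_by[of "{1}"]) (use a in simp_all)
  moreover have "{{0},{1},{2}} \<noteq> {{0,1,2::nat}}" by (rule neq_by[of "{0}"]) (use a in simp_all)
  moreover have "{{0,1},{2}} \<noteq> {{0,2},{1::nat}}" by (rule neq_by[of "{2}"]) (use a in simp_all)
  moreover have "{{0,1},{2}} \<noteq> {{1,2},{0::nat}}" by (rule neq_by[of "{2}"]) (use a in simp_all)
  moreover have "{{0,1},{2}} \<noteq> {{0,1,2::nat}}" by (rule neq_by[of "{2}"]) (use a in simp_all)
  moreover have "{{0,2},{1}} \<noteq> {{1,2},{0::nat}}" by (rule neq_by[of "{1}"]) (use a in simp_all)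
  moreover have "{{0,2},{1}} \<noteq> {{0,1,2::nat}}" by (rule neq_by[of "{1}"]) (use a in simp_all)
  moreover have "{{1,2},{0}} \<noteq> {{0,1,2::nat}}" by (rule neq_by[of "{0}"]) (use a in simp_all)
  ultimately show ?thesis by (simp only: distinct.simps list.set) blast
qed

lemma pneq: "{{0},{1},{2}} \<noteq> {{0,1},{2::nat}}" "{{0},{1},{2}} \<noteq> {{0,2},{1::nat}}" "{{0},{1},{2}} \<noteq> {{1,2},{0::nat}}" "{{0},{1},{2}} \<noteq> {{0,1,2::nat}}" "{{0,1},{2}} \<noteq> {{0,2},{1::nat}}" "{{0,1},{2}} \<noteq> {{1,2},{0::nat}}" "{{0,1},{2}} \<noteq> {{0,1,2::nat}}" "{{0,2},{1}} \<noteq> {{1,2},{0::nat}}" "{{0,2},{1}} \<noteq> {{0,1,2::nat}}" "{{1,2},{0}} \<noteq> {{0,1,2::nat}}"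
  using pdist by auto

lemmas pneq2 = pneq pneq[symmetric]

lemma C2_rel: "\<forall>a\<in>(UNIV::(bool\<times>bool) set). \<forall>b\<in>UNIV. C2xC2_le a b \<longleftrightarrow> (a = b \<or> a = (False,False) \<or> b = (True,True))"
  by (auto simp: C2xC2_le_def)

lemma gen5: "distinct [p1,p2,p3,p4,p5] \<Longrightarrow>
  R p1 p1 \<Longrightarrow> R p1 p2 \<Longrightarrow> R p1 p3 \<Longrightarrow> R p1 p4 \<Longrightarrow> R p1 p5 \<Longrightarrow>
  \<not> R p2 p1 \<Longrightarrow> R p2 p2 \<Longrightarrow> \<not> R p2 p3 \<Longrightarrow> \<not> R p2 p4 \<Longrightarrow> R p2 p5 \<Longrightarrow>
  \<not> R p3 p1 \<Longrightarrow> \<not> R p3 p2 \<Longrightarrow> R p3 p3 \<Longrightarrow> \<not> R p3 p4 \<Longrightarrow> R p3 p5 \<Longrightarrow>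
  \<not> R p4 p1 \<Longrightarrow> \<not> R p4 p2 \<Longrightarrow> \<not> R p4 p3 \<Longrightarrow> R p4 p4 \<Longrightarrow> R p4 p5 \<Longrightarrow>
  \<not> R p5 p1 \<Longrightarrow> \<not> R p5 p2 \<Longrightarrow> \<not> R p5 p3 \<Longrightarrow> \<not> R p5 p4 \<Longrightarrow> R p5 p5 \<Longrightarrow>
  \<forall>a\<in>{p1,p2,p3,p4,p5}. \<forall>b\<in>{p1,p2,p3,p4,p5}. R a b \<longleftrightarrow> (a = b \<or> a = p1 \<or> b = p5)"
  by (simp (no_asm_simp)) (simp add: eq_commute)

lemma r00: "refines {{0},{1},{2::nat}} {{0},{1},{2::nat}}" by (simp add: refines_def)
lemma r01: "refines {{0},{1},{2::nat}} {{0,1},{2::nat}}" by (simp add: refines_def)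
lemma r02: "refines {{0},{1},{2::nat}} {{0,2},{1::nat}}" by (simp add: refines_def)
lemma r03: "refines {{0},{1},{2::nat}} {{1,2},{0::nat}}" by (simp add: refines_def)
lemma r04: "refines {{0},{1},{2::nat}} {{0,1,2::nat}}" by (simp add: refines_def)
lemma r10: "\<not> refines {{0,1},{2::nat}} {{0},{1},{2::nat}}" by (simp add: refines_def)
lemma r11: "refines {{0,1},{2::nat}} {{0,1},{2::nat}}" by (simp add: refines_def)
lemma r12: "\<not> refines {{0,1},{2::nat}} {{0,2},{1::nat}}" by (simp add: refines_def)
lemma r13: "\<not> refines {{0,1},{2::nat}} {{1,2},{0::nat}}" by (simp add: refines_def)
lemma r14: "refines {{0,1},{2::nat}} {{0,1,2::nat}}" by (simp add: refines_def)
lemma r20: "\<not> refines {{0,2},{1::nat}} {{0},{1},{2::nat}}" by (simp add: refines_def)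
lemma r21: "\<not> refines {{0,2},{1::nat}} {{0,1},{2::nat}}" by (simp add: refines_def)
lemma r22: "refines {{0,2},{1::nat}} {{0,2},{1::nat}}" by (simp add: refines_def)
lemma r23: "\<not> refines {{0,2},{1::nat}} {{1,2},{0::nat}}" by (simp add: refines_def)
lemma r24: "refines {{0,2},{1::nat}} {{0,1,2::nat}}" by (simp add: refines_def)
lemma r30: "\<not> refines {{1,2},{0::nat}} {{0},{1},{2::nat}}" by (simp add: refines_def)
lemma r31: "\<not> refines {{1,2},{0::nat}} {{0,1},{2::nat}}" by (simp add: refines_def)
lemma r32: "\<not> refines {{1,2},{0::nat}} {{0,2},{1::nat}}" by (simp add: refines_def)
lemma r33: "refines {{1,2},{0::nat}} {{1,2},{0::nat}}" by (simp add: refines_def)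
lemma r34: "refines {{1,2},{0::nat}} {{0,1,2::nat}}" by (simp add: refines_def)
lemma r40: "\<not> refines {{0,1,2::nat}} {{0},{1},{2::nat}}" by (simp add: refines_def)
lemma r41: "\<not> refines {{0,1,2::nat}} {{0,1},{2::nat}}" by (simp add: refines_def)
lemma r42: "\<not> refines {{0,1,2::nat}} {{0,2},{1::nat}}" by (simp add: refines_def)
lemma r43: "\<not> refines {{0,1,2::nat}} {{1,2},{0::nat}}" by (simp add: refines_def)
lemma r44: "refines {{0,1,2::nat}} {{0,1,2::nat}}" by (simp add: refines_def)

lemma Pi3_rel: "\<forall>a\<in>Pi3. \<forall>b\<in>Pi3. refines a b \<longleftrightarrow> (a = b \<or> a = {{0},{1},{2}} \<or> b = {{0,1,2}})"
  unfolding Pi3_eq by (rule gen5[OF pdist r00 r01 r02 r03 r04 r10 r11 r12 r13 r14 r20 r21 r22 r23 r24 r30 r31 r32 r33 r34 r40 r41 r42 r43 r44])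

lemma mid_basic:
  assumes "rank_two M N u w"
  shows "u \<noteq> w" "u \<notin> middles M N u w" "w \<notin> middles M N u w"
proof -
  have r: "rk w = rk u + 2" using rank_two_rk[OF assms] .
  show "u \<noteq> w" using r by auto
  show "u \<notin> middles M N u w" using middles_rk[of u M N u w] by auto
  show "w \<notin> middles M N u w" using middles_rk[of w M N u w] r by auto
qed

lemma iso_C2:
  assumes r: "rank_two M N u w" and m: "middles M N u w = {v1, v2}" and d: "v1 \<noteq> v2"
  shows "ord_iso (interval M N u w) (wle M N) UNIV C2xC2_le"
proof -
  have I: "interval M N u w = {u, w, v1, v2}" using interval_eq[OF r] m by auto
  have ne: "u \<noteq> w" "u \<noteq> v1" "u \<noteq> v2" "w \<noteq> v1" "w \<noteq> v2" using mid_basic[OF r] m by auto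
  define f where "f x = (if x = u then (False,False) else if x = v1 then (True,False)
     else if x = v2 then (False,True) else (True,True))" for x
  have fu: "f u = (False, False)" and fw: "f w = (True,True)" using ne by (auto simp: f_def)
  have bij: "bij_betw f {u, w, v1, v2} UNIV"
    unfolding bij_betw_def
  proof
    show "inj_on f {u, w, v1, v2}" using ne d by (auto simp: f_def inj_on_def)
    show "f ` {u, w, v1, v2} = UNIV"
    proof -
      have "f ` {u, w, v1, v2} = {f u, f w, f v1, f v2}" by simp
      also have "\<dots> = {(False,False), (True,True), (True,False), (False,True)}"
        using ne d by (simp add: f_def)
      also have "\<dots> = UNIV" by auto
      finally show ?thesis .
    qed
  qed
  have rel: "\<forall>a\<in>{u, w, v1, v2}. \<forall>b\<in>{u, w, v1, v2}. wle M N a b \<longleftrightarrow> (a = b \<or> a = u \<or> b = w)"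
    using interval_rel[OF r] I by blast
  have rel2: "\<forall>a\<in>UNIV. \<forall>b\<in>UNIV. C2xC2_le a b \<longleftrightarrow> (a = b \<or> a = f u \<or> b = f w)"
    using C2_rel unfolding fu fw .
  show ?thesis unfolding I by (rule iso_gen[OF bij rel rel2]) auto
qed

lemma iso_Pi3:
  assumes r: "rank_two M N u w" and m: "middles M N u w = {g1, g2, g3}" and d: "distinct [g1, g2, g3]"
  shows "ord_iso (interval M N u w) (wle M N) Pi3 refines"
proof -
  have I: "interval M N u w = {u, w, g1, g2, g3}" using interval_eq[OF r] m by auto
  have ne: "u \<noteq> w" "u \<noteq> g1" "u \<noteq> g2" "u \<noteq> g3" "w \<noteq> g1" "w \<noteq> g2" "w \<noteq> g3"
    using mid_basic[OF r] m by auto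
  define f where "f x = (if x = u then {{0},{1},{2}} else if x = g1 then {{0,1},{2}}
     else if x = g2 then {{0,2},{1}} else if x = g3 then {{1,2},{0}} else {{0,1,2::nat}})" for x
  have fu: "f u = {{0},{1},{2}}" and fw: "f w = {{0,1,2}}" using ne by (auto simp: f_def)
  have bij: "bij_betw f {u, w, g1, g2, g3} Pi3"
    unfolding bij_betw_def
  proof
    have fv: "f g1 = {{0,1},{2}}" "f g2 = {{0,2},{1}}" "f g3 = {{1,2},{0}}"
      using ne d by (auto simp: f_def)
    have "distinct (map f [u, w, g1, g2, g3])" unfolding list.map fu fw fv
      using pneq2 by simp
    then show "inj_on f {u, w, g1, g2, g3}" by (simp only: distinct_map list.set)
    show "f ` {u, w, g1, g2, g3} = Pi3"
    proof -
      have fv: "f g1 = {{0,1},{2}}" "f g2 = {{0,2},{1}}" "f g3 = {{1,2},{0}}"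
        using ne d by (auto simp: f_def)
      have "f ` {u, w, g1, g2, g3} = {f u, f w, f g1, f g2, f g3}" by simp
      also have "\<dots> = {{{0},{1},{2}}, {{0,1,2}}, {{0,1},{2}}, {{0,2},{1}}, {{1,2},{0}}}"
        by (simp only: fu fw fv)
      also have "\<dots> = Pi3" unfolding Pi3_eq by (simp only: insert_commute)
      finally show ?thesis .
    qed
  qed
  have rel: "\<forall>a\<in>{u, w, g1, g2, g3}. \<forall>b\<in>{u, w, g1, g2, g3}. wle M N a b \<longleftrightarrow> (a = b \<or> a = u \<or> b = w)"
    using interval_rel[OF r] I by blast
  have rel2: "\<forall>a\<in>Pi3. \<forall>b\<in>Pi3. refines a b \<longleftrightarrow> (a = b \<or> a = f u \<or> b = f w)"
    using Pi3_rel unfolding fu fw .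
  show ?thesis unfolding I by (rule iso_gen[OF bij rel rel2]) auto
qed

lemma imm_iff: "imm_after x k l \<longleftrightarrow> (\<exists>p q. x = p @ X k # l # q)"
  by (simp add: imm_after_def)

lemma imm_intro: "x = p @ X k # a # q \<Longrightarrow> imm_after x k a"
  by (auto simp: imm_iff)

lemma imm_set: "imm_after x k l \<Longrightarrow> X k \<in> set x \<and> l \<in> set x"
  by (auto simp: imm_iff)

lemma I1: "distinct x \<Longrightarrow> imm_after x k a \<Longrightarrow> imm_after x k b \<Longrightarrow> a = b"
proof -
  assume d: "distinct x" and h1: "imm_after x k a" and h2: "imm_after x k b"
  obtain p q where e1: "x = p @ X k # a # q" using h1 by (auto simp: imm_iff)
  obtain p' q' where e2: "x = p' @ X k # b # q'" using h2 by (auto simp: imm_iff)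
  note e = e1 e2
  then have "X k \<notin> set p" "X k \<notin> set (a # q)" using d by auto
  then have "p = p' \<and> a # q = b # q'" using e append_Cons_eq_iff by metis
  then show "a = b" by simp
qed

lemma I2: "distinct x \<Longrightarrow> imm_after x k a \<Longrightarrow> imm_after x k' a \<Longrightarrow> k = k'"
proof -
  assume d: "distinct x" and h1: "imm_after x k a" and h2: "imm_after x k' a"
  obtain p q where e1: "x = (p @ [X k]) @ a # q" using h1 by (auto simp: imm_iff)
  obtain p' q' where e2: "x = (p' @ [X k']) @ a # q'" using h2 by (auto simp: imm_iff)
  note e = e1 e2
  then have "a \<notin> set (p @ [X k])" "a \<notin> set q" using d by auto
  then have "p @ [X k] = p' @ [X k'] \<and> q = q'" using e append_Cons_eq_iff by metis
  then show "k = k'" by simp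
qed

lemma I3: "imm_after x k a \<Longrightarrow> b \<noteq> X k \<Longrightarrow> b \<noteq> a \<Longrightarrow> imm_after (removeAll b x) k a"
  unfolding imm_iff by (elim exE) (rule exI, rule exI, simp)

lemma I4:
  assumes d: "distinct x" and i: "imm_after (removeAll b x) k a" and n1: "b \<noteq> X k" and n2: "b \<noteq> a"
  shows "imm_after x k a \<or> (\<exists>p q. x = p @ X k # b # a # q)"
proof (cases "b \<in> set x")
  case False then show ?thesis using i by (simp add: removeAll_id)
next
  case True
  then obtain s t where x: "x = s @ b # t" by (metis in_set_conv_decomp)
  then have "removeAll b x = s @ t" using d removeAll_mid by simp
  with i obtain p q where e: "s @ t = p @ X k # a # q" by (auto simp: imm_iff)
  then have "(\<exists>us. s = p @ us \<and> us @ t = X k # a # q) \<or> (\<exists>us. p = s @ us \<and> t = us @ X k # a # q)"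
    by (simp add: append_eq_append_conv2) (metis)
  then show ?thesis
  proof (elim disjE exE conjE)
    fix us assume s: "s = p @ us" and t: "us @ t = X k # a # q"
    show ?thesis
    proof (cases us)
      case Nil then show ?thesis using s t x imm_intro[of x "p @ [b]" k a q] by auto
    next
      case (Cons y us1)
      then have y: "y = X k" and t1: "us1 @ t = a # q" using t by auto
      show ?thesis
      proof (cases us1)
        case Nil then show ?thesis using s t1 x Cons y by auto
      next
        case (Cons z us2)
        then have "s = p @ X k # a # us2" using s \<open>us = y # us1\<close> y t1 by auto
        then show ?thesis using x imm_intro[of x p k a "us2 @ b # t"] by auto
      qed
    qed
  next
    fix us assume "p = s @ us" "t = us @ X k # a # q"
    then show ?thesis using x imm_intro[of x "s @ b # us" k a q] by auto
  qed
qed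

lemma I5:
  assumes d: "distinct v" and u: "u = removeAll (X k) v" and n: "\<not> imm_after v k a" and a: "a \<noteq> X k"
  shows "imm_after v l a \<longleftrightarrow> imm_after u l a"
proof
  assume h: "imm_after v l a"
  then have "l \<noteq> k" using n by auto
  then show "imm_after u l a" using I3[OF h] a u by auto
next
  assume h: "imm_after u l a"
  have "X l \<in> set u" using imm_set[OF h] by simp
  then have "X k \<noteq> X l" using u by auto
  then have "imm_after v l a \<or> (\<exists>p q. v = p @ X l # X k # a # q)"
    using I4[OF d, of "X k" l a] h u a by auto
  then show "imm_after v l a"
  proof
    assume "\<exists>p q. v = p @ X l # X k # a # q"
    then obtain p q where "v = p @ X l # X k # a # q" by blast
    then have "imm_after v k a" using imm_intro[of v "p @ [X l]" k a q] by simp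
    then show ?thesis using n by simp
  qed
qed

lemma removeAll_comm: "removeAll a (removeAll b x) = removeAll b (removeAll a x)"
  by (induction x) auto

lemma inserted_eq: "X k \<in> set y \<Longrightarrow> inserted (removeAll (X k) y) y = X k"
  unfolding inserted_def by (rule the_equality) auto

lemma deleted_eq: "d \<in> set x \<Longrightarrow> deleted x (removeAll d x) = d"
  unfolding deleted_def by (rule the_equality) auto

lemma len_rem: "d \<in> set x \<Longrightarrow> length (removeAll d x) < length x"
  by (induction x) (auto simp: le_imp_less_Suc length_removeAll_less_eq)

lemma lab_ins: "c ! i = x \<Longrightarrow> c ! Suc i = y \<Longrightarrow> X k \<in> set y \<Longrightarrow> x = removeAll (X k) y \<Longrightarrow> label c i = X k"
proof -
  assume h: "c ! i = x" "c ! Suc i = y" "X k \<in> set y" "x = removeAll (X k) y"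
  then have "length (c ! i) < length (c ! Suc i)" using len_rem by simp
  then show ?thesis unfolding label_def using h inserted_eq by simp
qed

lemma del_after_ins: "c ! i = x \<Longrightarrow> c ! Suc i = y \<Longrightarrow> X k' \<in> set y \<Longrightarrow> x = removeAll (X k') y \<Longrightarrow> \<not> del_after c i k"
  unfolding del_after_def using len_rem[of "X k'" "c ! Suc i"] by auto

lemma del_after_del: "c ! i = x \<Longrightarrow> c ! Suc i = removeAll d x \<Longrightarrow> d \<in> set x \<Longrightarrow> del_after c i k \<longleftrightarrow> imm_after x k d"
  unfolding del_after_def using len_rem deleted_eq by auto

lemma lab_delX:
  assumes "c ! i = x" "c ! Suc i = removeAll d x" "d \<in> set x" "distinct x" "imm_after x k d"
    "\<forall>j<i. \<not> del_after c j k"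
  shows "label c i = X k"
proof -
  have nl: "\<not> length (c ! i) < length (c ! Suc i)" using assms(1-3) len_rem
    by (metis less_asym)
  have P: "del_after c i k \<and> (\<forall>j<i. \<not> del_after c j k)" using assms del_after_del by blast
  have "(THE k. del_after c i k \<and> (\<forall>j<i. \<not> del_after c j k)) = k"
  proof (rule the_equality)
    show "del_after c i k \<and> (\<forall>j<i. \<not> del_after c j k)" by (rule P)
    fix k' assume "del_after c i k' \<and> (\<forall>j<i. \<not> del_after c j k')"
    then have "imm_after x k' d" using del_after_del assms(1-3) by blast
    then show "k' = k" using I2[OF assms(4) assms(5)] by simp
  qed
  then show ?thesis unfolding label_def using nl P by auto
qed

lemma lab_delA:
  assumes "c ! i = x" "c ! Suc i = removeAll d x" "d \<in> set x"
    "\<forall>k. imm_after x k d \<longrightarrow> (\<exists>j<i. del_after c j k)"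
  shows "label c i = d"
proof -
  have nl: "\<not> length (c ! i) < length (c ! Suc i)" using assms(1-3) len_rem
    by (metis less_asym)
  have "\<not> (\<exists>k. del_after c i k \<and> (\<forall>j<i. \<not> del_after c j k))"
    using assms del_after_del by blast
  then show ?thesis unfolding label_def using nl assms deleted_eq by auto
qed

lemma cov_keepX: "cov M N x y \<Longrightarrow> X k \<in> set x \<Longrightarrow> X k \<in> set y"
  unfolding cov_char by auto

lemma chain_keepX:
  assumes "chain_ft M N lo a b" "j \<le> i" "i < length lo" "X k \<in> set (lo ! j)"
  shows "X k \<in> set (lo ! i)"
  using assms(2,3)
proof (induction i)
  case 0 then show ?case using assms(4) by simp
next
  case (Suc i)
  show ?case
  proof (cases "j = Suc i")
    case True then show ?thesis using assms(4) by simp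
  next
    case False
    then have "X k \<in> set (lo ! i)" using Suc by auto
    moreover have "cov M N (lo ! i) (lo ! Suc i)" using assms(1) Suc.prems by (auto simp: chain_ft_def)
    ultimately show ?thesis using cov_keepX by blast
  qed
qed

lemma hist_in_u:
  assumes "chain_ft M N lo a u" "j < length lo - 1" "del_after lo j k"
  shows "X k \<in> set u"
proof -
  have "X k \<in> set (lo ! j)" using assms(3) imm_set by (auto simp: del_after_def)
  then have "X k \<in> set (lo ! (length lo - 1))"
    using chain_keepX[OF assms(1), of j "length lo - 1"] assms(2) by auto
  moreover have "lo \<noteq> []" "last lo = u" using assms(1) by (auto simp: chain_ft_def)
  ultimately show ?thesis by (simp add: last_conv_nth)
qed

definition H :: "letter list list \<Rightarrow> nat \<Rightarrow> bool" where
  "H lo k \<longleftrightarrow> (\<exists>j<length lo - 1. del_after lo j k)"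

definition lab1 :: "letter list list \<Rightarrow> letter list \<Rightarrow> letter \<Rightarrow> letter" where
  "lab1 lo x d = (if \<exists>l. imm_after x l d \<and> \<not> H lo l then X (THE l. imm_after x l d) else d)"

definition lab2 :: "letter list list \<Rightarrow> letter list \<Rightarrow> letter \<Rightarrow> letter list \<Rightarrow> letter \<Rightarrow> letter" where
  "lab2 lo u d1 x d = (if \<exists>l. imm_after x l d \<and> \<not> H lo l \<and> \<not> imm_after u l d1
     then X (THE l. imm_after x l d) else d)"

lemma the_imm: "distinct x \<Longrightarrow> imm_after x l d \<Longrightarrow> (THE l. imm_after x l d) = l"
  using I2 by blast

lemma lab1_X: "distinct x \<Longrightarrow> imm_after x l d \<Longrightarrow> \<not> H lo l \<Longrightarrow> lab1 lo x d = X l"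
  unfolding lab1_def using the_imm by auto

lemma lab1_A: "\<not> (\<exists>l. imm_after x l d \<and> \<not> H lo l) \<Longrightarrow> lab1 lo x d = d"
  unfolding lab1_def by auto

lemma lab1_in: "d \<in> set x \<Longrightarrow> distinct x \<Longrightarrow> lab1 lo x d \<in> set x"
  unfolding lab1_def using the_imm imm_set by auto

lemma lab1_cases: "distinct x \<Longrightarrow> lab1 lo x d = d \<or> (\<exists>l. imm_after x l d \<and> lab1 lo x d = X l)"
  unfolding lab1_def using the_imm by auto

context
  fixes M N lo hi u w
  assumes lo: "chain_ft M N lo (bottom M) u" and hi: "chain_ft M N hi w (top_word N)"
begin

lemma lo_ne: "lo \<noteq> []" and lo_last: "last lo = u" and hi_ne: "hi \<noteq> []" and hi_hd: "hd hi = w"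
  using lo hi by (auto simp: chain_ft_def)

lemma pos1: "(lo @ v # hi) ! (length lo - 1) = u"
  using lo_ne lo_last by (simp add: nth_append last_conv_nth)

lemma pos2: "(lo @ v # hi) ! Suc (length lo - 1) = v"
  using lo_ne by (simp add: nth_append)

lemma pos3: "(lo @ v # hi) ! Suc (Suc (length lo - 1)) = w"
  using lo_ne hi_ne hi_hd by (simp add: nth_append hd_conv_nth)

lemma hist: "j < length lo - 1 \<Longrightarrow> del_after (lo @ v # hi) j k = del_after lo j k"
proof -
  assume j: "j < length lo - 1"
  then have "Suc j < length lo" "j < length lo" by auto
  then show ?thesis unfolding del_after_def by (simp add: nth_append)
qed

lemma ind_eq: "ind_labels lo v hi = (label (lo @ v # hi) (length lo - 1), label (lo @ v # hi) (Suc (length lo - 1)))"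
  using lo_ne by (simp add: ind_labels_def)

lemma hist_all: "(\<forall>j<length lo - 1. \<not> del_after (lo @ v # hi) j k) \<longleftrightarrow> \<not> H lo k"
  unfolding H_def using hist by auto

lemma step1_ins: "X k \<in> set v \<Longrightarrow> u = removeAll (X k) v \<Longrightarrow> label (lo @ v # hi) (length lo - 1) = X k"
  using lab_ins[OF pos1 pos2] by blast

lemma step1_del: "d \<in> set u \<Longrightarrow> distinct u \<Longrightarrow> v = removeAll d u \<Longrightarrow> label (lo @ v # hi) (length lo - 1) = lab1 lo u d"
proof -
  assume d: "d \<in> set u" "distinct u" "v = removeAll d u"
  show ?thesis
  proof (cases "\<exists>l. imm_after u l d \<and> \<not> H lo l")
    case True
    then obtain l where l: "imm_after u l d" "\<not> H lo l" by blast
    have "label (lo @ v # hi) (length lo - 1) = X l"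
      using lab_delX[OF pos1 pos2[of v, unfolded d(3)] d(1,2) l(1)] hist_all l(2) d(3) by simp
    then show ?thesis using lab1_X[OF d(2) l] by simp
  next
    case False
    have "\<forall>k. imm_after u k d \<longrightarrow> (\<exists>j<length lo - 1. del_after (lo @ v # hi) j k)"
      using hist_all[of v] False by blast
    then have "label (lo @ v # hi) (length lo - 1) = d"
      using lab_delA[OF pos1 pos2[of v, unfolded d(3)] d(1)] d(3) by auto
    then show ?thesis using lab1_A[OF False] by simp
  qed
qed

lemma step2_ins: "X k \<in> set w \<Longrightarrow> v = removeAll (X k) w \<Longrightarrow> label (lo @ v # hi) (Suc (length lo - 1)) = X k"
  using lab_ins[OF pos2 pos3] by blast

lemma hist2: "(\<forall>j<Suc (length lo - 1). \<not> del_after (lo @ v # hi) j k) \<longleftrightarrow>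
   \<not> H lo k \<and> \<not> del_after (lo @ v # hi) (length lo - 1) k"
  using hist_all[of v k] less_Suc_eq by auto

lemma step2_del_after_ins: "d \<in> set v \<Longrightarrow> distinct v \<Longrightarrow> w = removeAll d v \<Longrightarrow>
   X k \<in> set v \<Longrightarrow> u = removeAll (X k) v \<Longrightarrow> label (lo @ v # hi) (Suc (length lo - 1)) = lab1 lo v d"
proof -
  assume d: "d \<in> set v" "distinct v" "w = removeAll d v" and i: "X k \<in> set v" "u = removeAll (X k) v"
  have nd: "\<And>l. \<not> del_after (lo @ v # hi) (length lo - 1) l"
    using del_after_ins[OF pos1 pos2 i] by blast
  show ?thesis
  proof (cases "\<exists>l. imm_after v l d \<and> \<not> H lo l")
    case True
    then obtain l where l: "imm_after v l d" "\<not> H lo l" by blast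
    have "label (lo @ v # hi) (Suc (length lo - 1)) = X l"
      using lab_delX[OF pos2 pos3[of v, unfolded d(3)] d(1,2) l(1)] hist2 nd l(2) d(3) by simp
    then show ?thesis using lab1_X[OF d(2) l] by simp
  next
    case False
    have "\<forall>k. imm_after v k d \<longrightarrow> (\<exists>j<Suc (length lo - 1). del_after (lo @ v # hi) j k)"
      using hist2[of v] nd False by blast
    then have "label (lo @ v # hi) (Suc (length lo - 1)) = d"
      using lab_delA[OF pos2 pos3[of v, unfolded d(3)] d(1)] d(3) by auto
    then show ?thesis using lab1_A[OF False] by simp
  qed
qed

lemma step2_del_after_del: "d1 \<in> set u \<Longrightarrow> v = removeAll d1 u \<Longrightarrow> d \<in> set v \<Longrightarrow> distinct v \<Longrightarrow>
   w = removeAll d v \<Longrightarrow> label (lo @ v # hi) (Suc (length lo - 1)) = lab2 lo u d1 v d"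
proof -
  assume e: "d1 \<in> set u" "v = removeAll d1 u" and d: "d \<in> set v" "distinct v" "w = removeAll d v"
  have da: "\<And>l. del_after (lo @ v # hi) (length lo - 1) l \<longleftrightarrow> imm_after u l d1"
    using del_after_del[OF pos1 pos2[of v, unfolded e(2)] e(1)] e(2) by simp
  show ?thesis
  proof (cases "\<exists>l. imm_after v l d \<and> \<not> H lo l \<and> \<not> imm_after u l d1")
    case True
    then obtain l where l: "imm_after v l d" "\<not> H lo l" "\<not> imm_after u l d1" by blast
    have "label (lo @ v # hi) (Suc (length lo - 1)) = X l"
      using lab_delX[OF pos2 pos3[of v, unfolded d(3)] d(1,2) l(1)] hist2 da l(2,3) d(3) by simp
    then show ?thesis using True the_imm[OF d(2) l(1)] by (simp add: lab2_def)
  next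
    case False
    have "\<forall>k. imm_after v k d \<longrightarrow> (\<exists>j<Suc (length lo - 1). del_after (lo @ v # hi) j k)"
      using hist2[of v] da False by blast
    then have "label (lo @ v # hi) (Suc (length lo - 1)) = d"
      using lab_delA[OF pos2 pos3[of v, unfolded d(3)] d(1)] d(3) by auto
    moreover have "lab2 lo u d1 v d = d" using False unfolding lab2_def by argo
    ultimately show ?thesis by simp
  qed
qed

lemma H_in_u: "H lo k \<Longrightarrow> X k \<in> set u"
  unfolding H_def using hist_in_u[OF lo] by blast

end

lemma DD_swap:
  assumes d: "distinct u" and m: "A m \<in> set u" and n: "A n \<in> set u" and mn: "m \<noteq> n"
  shows "lab1 lo u (A m) = lab2 lo u (A n) (removeAll (A n) u) (A m)"
proof (cases "\<exists>l. imm_after u l (A m) \<and> \<not> H lo l")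
  case True
  then obtain l where l: "imm_after u l (A m)" "\<not> H lo l" by blast
  have d2: "distinct (removeAll (A n) u)" using d by (simp add: distinct_removeAll)
  have i2: "imm_after (removeAll (A n) u) l (A m)" using I3[OF l(1)] mn by auto
  have ni: "\<not> imm_after u l (A n)" using I1[OF d l(1)] mn by auto
  have "lab2 lo u (A n) (removeAll (A n) u) (A m) = X l"
    unfolding lab2_def using i2 l(2) ni the_imm[OF d2 i2] by auto
  then show ?thesis using lab1_X[OF d l] by simp
next
  case False
  have "\<not> (\<exists>l. imm_after (removeAll (A n) u) l (A m) \<and> \<not> H lo l \<and> \<not> imm_after u l (A n))"
  proof
    assume "\<exists>l. imm_after (removeAll (A n) u) l (A m) \<and> \<not> H lo l \<and> \<not> imm_after u l (A n)"
    then obtain l where l: "imm_after (removeAll (A n) u) l (A m)" "\<not> H lo l" "\<not> imm_after u l (A n)" by blast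
    have "imm_after u l (A m) \<or> (\<exists>p q. u = p @ X l # A n # A m # q)"
      using I4[OF d l(1)] mn by auto
    then show False
    proof
      assume "imm_after u l (A m)" then show False using False l(2) by blast
    next
      assume "\<exists>p q. u = p @ X l # A n # A m # q"
      then have "imm_after u l (A n)" using imm_intro by blast
      then show False using l(3) by simp
    qed
  qed
  then have "lab2 lo u (A n) (removeAll (A n) u) (A m) = A m" unfolding lab2_def by argo
  then show ?thesis using lab1_A[OF False] by simp
qed

lemma A_idx_remX: "A_idx (removeAll (X k) v) = A_idx v"
  by (induction v) (auto simp: A_idx_def split: letter.splits)

lemma X_idx_remA: "X_idx (removeAll (A m) v) = X_idx v"
  by (induction v) (auto simp: X_idx_def split: letter.splits)

lemma sw_mid:
  assumes "shuffle_word M N u" "shuffle_word M N w" "distinct v" "u = removeAll (X k) v" "w = removeAll (A m) v"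
  shows "shuffle_word M N v"
proof -
  have "set v \<subseteq> set u \<union> set w" using assms(4,5) by auto
  then have "set v \<subseteq> alphabet M N" using assms(1,2) by (auto simp: shuffle_word_def)
  moreover have "A_idx v = A_idx u" "X_idx v = X_idx w" using assms(4,5) A_idx_remX X_idx_remA by auto
  ultimately show ?thesis using assms(1,2,3) by (simp add: shuffle_word_def)
qed

definition IDm :: "nat \<Rightarrow> nat \<Rightarrow> letter list \<Rightarrow> letter list \<Rightarrow> nat \<Rightarrow> nat \<Rightarrow> letter list \<Rightarrow> bool" where
  "IDm M N u w k m v \<longleftrightarrow> shuffle_word M N v \<and> X k \<in> set v \<and> u = removeAll (X k) v \<and> w = removeAll (A m) v"

lemma rem_nil: "removeAll a xs = [] \<Longrightarrow> distinct xs \<Longrightarrow> xs \<noteq> [] \<Longrightarrow> xs = [a]"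
proof -
  assume h: "removeAll a xs = []" "distinct xs" "xs \<noteq> []"
  then have s: "set xs \<subseteq> {a}" by (metis Diff_eq_empty_iff set_empty set_removeAll)
  then obtain y ys where xs: "xs = y # ys" using h(3) by (cases xs) auto
  then have "y = a" using s by auto
  moreover have "ys = []" using s xs h(2) by (cases ys) auto
  ultimately show ?thesis using xs by simp
qed

lemma decomp_ins:
  assumes "distinct v" "X k \<in> set v"
  obtains s t where "v = s @ X k # t" "removeAll (X k) v = s @ t"
  using assms removeAll_mid by (metis in_set_conv_decomp)

lemma uniq_aux:
  assumes d: "distinct u" and sw: "distinct w"
    and v: "v = s @ X k # t" "u = s @ t" and v': "v' = (s @ us) @ X k # t'" "u = (s @ us) @ t'"
    and t: "t = us @ t'" and ne: "us \<noteq> []"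
    and w: "w = removeAll (A m) v" "w = removeAll (A m) v'"
    and nX: "X k \<notin> set u"
  shows "u = s @ A m # t' \<and> w = s @ X k # t' \<and> v = s @ X k # A m # t' \<and> v' = s @ A m # X k # t'"
proof -
  have w1: "w = removeAll (A m) s @ X k # removeAll (A m) t" using w(1) v(1) by simp
  have w2: "w = (removeAll (A m) s @ removeAll (A m) us) @ X k # removeAll (A m) t'" using w(2) v'(1) by simp
  have n1: "X k \<notin> set (removeAll (A m) s)" and n2: "X k \<notin> set (removeAll (A m) t)" using nX v(2) by auto
  have "removeAll (A m) s @ X k # removeAll (A m) t = (removeAll (A m) s @ removeAll (A m) us) @ X k # removeAll (A m) t'"
    using trans[OF w1[symmetric] w2] .
  then have "removeAll (A m) s = removeAll (A m) s @ removeAll (A m) us"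
    by (subst (asm) append_Cons_eq_iff[OF n1 n2]) simp
  then have r: "removeAll (A m) us = []" by simp
  have du: "distinct us" using d v'(2) by simp
  have us: "us = [A m]" by (rule rem_nil[OF r du ne])
  have a1: "A m \<notin> set s" and a2: "A m \<notin> set t'" using d v'(2) us by auto
  have e1: "u = s @ A m # t'" using v(2) t us by simp
  have e2: "v = s @ X k # A m # t'" using v(1) t us by simp
  have e3: "v' = s @ A m # X k # t'" using v'(1) us by simp
  have e4: "w = s @ X k # t'" using w(1) e2 a1 a2 by (simp add: removeAll_id)
  show ?thesis using e1 e2 e3 e4 by blast
qed

lemma uniq:
  assumes d: "distinct u" and dw: "distinct w" and nX: "X k \<notin> set u"
    and h: "IDm M N u w k m v" "IDm M N u w k m v'" "v \<noteq> v'"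
  shows "\<exists>p q. u = p @ A m # q \<and> w = p @ X k # q \<and>
     ((v = p @ X k # A m # q \<and> v' = p @ A m # X k # q) \<or> (v = p @ A m # X k # q \<and> v' = p @ X k # A m # q))"
proof -
  have dv: "distinct v" "distinct v'" using h(1,2) by (auto simp: IDm_def shuffle_word_def)
  obtain s t where st: "v = s @ X k # t" "removeAll (X k) v = s @ t" using decomp_ins dv(1) h(1) IDm_def by metis
  obtain s' t' where st': "v' = s' @ X k # t'" "removeAll (X k) v' = s' @ t'" using decomp_ins dv(2) h(2) IDm_def by metis
  have u1: "u = s @ t" and u2: "u = s' @ t'" using st st' h by (auto simp: IDm_def)
  have w1: "w = removeAll (A m) v" "w = removeAll (A m) v'" using h by (auto simp: IDm_def)
  have "(\<exists>us. s = s' @ us \<and> us @ t = t') \<or> (\<exists>us. s' = s @ us \<and> t = us @ t')"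
    using u1 u2 append_eq_append_conv2[of s t s' t'] by metis
  then show ?thesis
  proof (elim disjE exE conjE)
    fix us assume a: "s = s' @ us" "us @ t = t'"
    have ne: "us \<noteq> []" using a st st' h(3) by auto
    have f1: "v = (s' @ us) @ X k # t" using a st(1) by simp
    have f2: "u = (s' @ us) @ t" using a u1 by simp
    have f3: "t' = us @ t" using a by simp
    have "u = s' @ A m # t \<and> w = s' @ X k # t \<and> v' = s' @ X k # A m # t \<and> v = s' @ A m # X k # t"
      by (rule uniq_aux[OF d dw st'(1) u2 f1 f2 f3 ne w1(2) w1(1) nX])
    then show ?thesis by blast
  next
    fix us assume a: "s' = s @ us" "t = us @ t'"
    have ne: "us \<noteq> []" using a st st' h(3) by auto
    have f1: "v' = (s @ us) @ X k # t'" using a st'(1) by simp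
    have f2: "u = (s @ us) @ t'" using a u2 by simp
    have f3: "t = us @ t'" using a by simp
    have "u = s @ A m # t' \<and> w = s @ X k # t' \<and> v = s @ X k # A m # t' \<and> v' = s @ A m # X k # t'"
      by (rule uniq_aux[OF d dw st(1) u1 f1 f2 f3 ne w1(1) w1(2) nX])
    then show ?thesis by blast
  qed
qed

lemma sw_rem: "shuffle_word M N x \<Longrightarrow> shuffle_word M N (removeAll a x)"
  by (simp add: removeAll_filter_not_eq sw_filter)

lemma exist_ID:
  assumes su: "shuffle_word M N u" and sw: "shuffle_word M N w" and am: "A m \<in> set u"
    and xk: "X k \<in> set w" and nx: "X k \<notin> set u" and e: "removeAll (A m) u = removeAll (X k) w"
  shows "\<exists>v. IDm M N u w k m v"
proof -
  have du: "distinct u" and dw: "distinct w" using su sw sw_distinct by auto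
  have na: "A m \<notin> set w"
  proof
    assume "A m \<in> set w"
    then have "A m \<in> set (removeAll (X k) w)" by simp
    then have "A m \<in> set (removeAll (A m) u)" using e by simp
    then show False by simp
  qed
  obtain p q where u: "u = p @ A m # q" using am by (metis in_set_conv_decomp)
  obtain p' q' where w: "w = p' @ X k # q'" using xk by (metis in_set_conv_decomp)
  have r1: "removeAll (A m) u = p @ q" using du u removeAll_mid by simp
  have r2: "removeAll (X k) w = p' @ q'" using dw w removeAll_mid by simp
  have pq: "p @ q = p' @ q'" using r1 r2 e by simp
  have "(\<exists>us. p = p' @ us \<and> us @ q = q') \<or> (\<exists>us. p' = p @ us \<and> q = us @ q')"
    using pq append_eq_append_conv2[of p q p' q'] by metis
  then obtain v where vd: "distinct v" and vx: "X k \<in> set v" and vu: "u = removeAll (X k) v"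
      and vw: "w = removeAll (A m) v"
  proof (elim disjE exE conjE)
    fix us assume a: "p = p' @ us" "us @ q = q'"
    define v where "v = p' @ X k # us @ A m # q"
    have u': "u = p' @ us @ A m # q" using u a by simp
    have w': "w = p' @ X k # us @ q" using w a by simp
    have n1: "X k \<notin> set p'" "X k \<notin> set us" "X k \<notin> set q" using nx u' by auto
    have n2: "A m \<notin> set p'" "A m \<notin> set us" "A m \<notin> set q" using na w' by auto
    have "distinct v" using du u' n1 by (auto simp: v_def)
    moreover have "X k \<in> set v" by (simp add: v_def)
    moreover have "u = removeAll (X k) v" using u' n1 by (simp add: v_def removeAll_id)
    moreover have "w = removeAll (A m) v" using w' n2 by (simp add: v_def removeAll_id)
    ultimately show thesis using that by blast
  next
    fix us assume a: "p' = p @ us" "q = us @ q'"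
    define v where "v = p @ A m # us @ X k # q'"
    have u': "u = p @ A m # us @ q'" using u a by simp
    have w': "w = p @ us @ X k # q'" using w a by simp
    have n1: "X k \<notin> set p" "X k \<notin> set us" "X k \<notin> set q'" using nx u' by auto
    have n2: "A m \<notin> set p" "A m \<notin> set us" "A m \<notin> set q'" using na w' by auto
    have "distinct v" using dw w' n2 by (auto simp: v_def)
    moreover have "X k \<in> set v" by (simp add: v_def)
    moreover have "u = removeAll (X k) v" using u' n1 by (simp add: v_def removeAll_id)
    moreover have "w = removeAll (A m) v" using w' n2 by (simp add: v_def removeAll_id)
    ultimately show thesis using that by blast
  qed
  have "shuffle_word M N v" by (rule sw_mid[OF su sw vd vu vw])
  then show ?thesis using vx vu vw unfolding IDm_def by blast
qed

lemma cov_del: "shuffle_word M N x \<Longrightarrow> a \<in> set x \<Longrightarrow> a = A m \<Longrightarrow> cov M N x (removeAll a x)"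
  unfolding cov_char using sw_rem by blast

lemma cov_ins: "shuffle_word M N y \<Longrightarrow> X k \<in> set y \<Longrightarrow> cov M N (removeAll (X k) y) y"
  unfolding cov_char using sw_rem by blast

lemma cov_E:
  assumes "cov M N x y"
  obtains (del) p where "A p \<in> set x" "y = removeAll (A p) x"
    | (ins) i where "X i \<in> set y" "x = removeAll (X i) y"
  using assms unfolding cov_char by blast

lemma mid_mixed:
  assumes su: "shuffle_word M N u" and sw: "shuffle_word M N w" and am: "A m \<in> set u"
    and xk: "X k \<in> set w" and nx: "X k \<notin> set u" and na: "A m \<notin> set w"
    and e: "removeAll (A m) u = removeAll (X k) w"
  shows "middles M N u w = insert (removeAll (A m) u) {v. IDm M N u w k m v}"
proof
  show "middles M N u w \<subseteq> insert (removeAll (A m) u) {v. IDm M N u w k m v}"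
  proof
    fix v assume "v \<in> middles M N u w"
    then have c1: "cov M N u v" and c2: "cov M N v w" by (auto simp: middles_def)
    have sv: "shuffle_word M N v" using c1 cov_sw by blast
    from c1 show "v \<in> insert (removeAll (A m) u) {v. IDm M N u w k m v}"
    proof (cases rule: cov_E)
      case (del p)
      from c2 show ?thesis
      proof (cases rule: cov_E)
        case (del r)
        then show ?thesis using xk nx \<open>v = removeAll (A p) u\<close> by auto
      next
        case (ins j)
        have "p = m"
        proof (rule ccontr)
          assume "p \<noteq> m"
          then have "A m \<in> set v" using am \<open>v = removeAll (A p) u\<close> by simp
          then have "A m \<in> set w" using \<open>v = removeAll (X j) w\<close> by simp
          then show False using na by simp
        qed
        then show ?thesis using \<open>v = removeAll (A p) u\<close> by simp
      qed
    next
      case (ins i)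
      from c2 show ?thesis
      proof (cases rule: cov_E)
        case (del r)
        have "X k \<in> set v" using xk \<open>w = removeAll (A r) v\<close> by simp
        then have ik: "i = k" using nx \<open>u = removeAll (X i) v\<close> by auto
        have "A m \<in> set v" using am \<open>u = removeAll (X i) v\<close> by simp
        then have "r = m" using na \<open>w = removeAll (A r) v\<close> by auto
        then show ?thesis using sv ik ins del \<open>X k \<in> set v\<close> by (simp add: IDm_def)
      next
        case (ins j)
        have "A m \<in> set w" using am \<open>u = removeAll (X i) v\<close> \<open>v = removeAll (X j) w\<close> by simp
        then show ?thesis using na by simp
      qed
    qed
  qed
next
  show "insert (removeAll (A m) u) {v. IDm M N u w k m v} \<subseteq> middles M N u w"
  proof
    fix v assume "v \<in> insert (removeAll (A m) u) {v. IDm M N u w k m v}"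
    then show "v \<in> middles M N u w"
    proof
      assume v: "v = removeAll (A m) u"
      have "cov M N u v" using cov_del[OF su am] v by simp
      moreover have "cov M N v w" using cov_ins[OF sw xk] v e by simp
      ultimately show ?thesis by (simp add: middles_def)
    next
      assume "v \<in> {v. IDm M N u w k m v}"
      then have i: "shuffle_word M N v" "X k \<in> set v" "u = removeAll (X k) v" "w = removeAll (A m) v"
        by (auto simp: IDm_def)
      have "cov M N u v" using cov_ins[OF i(1,2)] i(3) by simp
      moreover have "A m \<in> set v" using am i(3) by auto
      then have "cov M N v w" using cov_del[OF i(1)] i(4) by simp
      ultimately show ?thesis by (simp add: middles_def)
    qed
  qed
qed

lemma mid_DD:
  assumes su: "shuffle_word M N u" and sw: "shuffle_word M N w" and am: "A m \<in> set u" and an: "A n \<in> set u"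
    and mn: "m \<noteq> n" and e: "w = removeAll (A n) (removeAll (A m) u)"
  shows "middles M N u w = {removeAll (A m) u, removeAll (A n) u}"
proof
  show "middles M N u w \<subseteq> {removeAll (A m) u, removeAll (A n) u}"
  proof
    fix v assume "v \<in> middles M N u w"
    then have c1: "cov M N u v" and c2: "cov M N v w" by (auto simp: middles_def)
    have wu: "set w \<subseteq> set u" using e by auto
    from c1 show "v \<in> {removeAll (A m) u, removeAll (A n) u}"
    proof (cases rule: cov_E)
      case (del p)
      from c2 show ?thesis
      proof (cases rule: cov_E)
        case (del r)
        have "A p \<notin> set w" using \<open>w = removeAll (A r) v\<close> \<open>v = removeAll (A p) u\<close> by simp
        then have "p = m \<or> p = n" using \<open>A p \<in> set u\<close> e by auto
        then show ?thesis using \<open>v = removeAll (A p) u\<close> by auto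
      next
        case (ins j)
        have "X j \<in> set u" using wu \<open>X j \<in> set w\<close> by auto
        then have "X j \<in> set v" using \<open>v = removeAll (A p) u\<close> by simp
        then show ?thesis using \<open>v = removeAll (X j) w\<close> by simp
      qed
    next
      case (ins i)
      have "X i \<notin> set u" using \<open>u = removeAll (X i) v\<close> by simp
      from c2 show ?thesis
      proof (cases rule: cov_E)
        case (del r)
        have "X i \<in> set w" using \<open>X i \<in> set v\<close> \<open>w = removeAll (A r) v\<close> by simp
        then show ?thesis using wu \<open>X i \<notin> set u\<close> by auto
      next
        case (ins j)
        have "A m \<in> set w" using am \<open>u = removeAll (X i) v\<close> \<open>v = removeAll (X j) w\<close> by simp
        then show ?thesis using e by simp
      qed
    qed
  qed
next
  have c1: "cov M N u (removeAll (A m) u)" using cov_del[OF su am] by simp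
  have c2: "cov M N (removeAll (A m) u) w"
    using cov_del[OF sw_rem[OF su], where a="A n" and m=n] an mn e by simp
  have c3: "cov M N u (removeAll (A n) u)" using cov_del[OF su an] by simp
  have e2: "w = removeAll (A m) (removeAll (A n) u)" using e removeAll_comm by metis
  have "A m \<in> set (removeAll (A n) u)" using am mn by simp
  then have c4: "cov M N (removeAll (A n) u) w"
    using cov_del[OF sw_rem[OF su, of "A n"] _ refl] e2 by simp
  show "{removeAll (A m) u, removeAll (A n) u} \<subseteq> middles M N u w"
    using c1 c2 c3 c4 by (simp add: middles_def)
qed

lemma mid_II:
  assumes su: "shuffle_word M N u" and sw: "shuffle_word M N w" and xi: "X i \<in> set w" and xj: "X j \<in> set w"
    and ij: "i \<noteq> j" and e: "u = removeAll (X i) (removeAll (X j) w)"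
  shows "middles M N u w = {removeAll (X j) w, removeAll (X i) w}"
proof
  show "middles M N u w \<subseteq> {removeAll (X j) w, removeAll (X i) w}"
  proof
    fix v assume "v \<in> middles M N u w"
    then have c1: "cov M N u v" and c2: "cov M N v w" by (auto simp: middles_def)
    have uw: "set u \<subseteq> set w" using e by auto
    from c1 show "v \<in> {removeAll (X j) w, removeAll (X i) w}"
    proof (cases rule: cov_E)
      case (del p)
      have "A p \<notin> set v" using \<open>v = removeAll (A p) u\<close> by simp
      from c2 show ?thesis
      proof (cases rule: cov_E)
        case (del r)
        have "A p \<notin> set w" using \<open>A p \<notin> set v\<close> \<open>w = removeAll (A r) v\<close> by simp
        then show ?thesis using uw \<open>A p \<in> set u\<close> by auto
      next
        case (ins r)
        have "A p \<notin> set w" using \<open>A p \<notin> set v\<close> \<open>v = removeAll (X r) w\<close> by simp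
        then show ?thesis using uw \<open>A p \<in> set u\<close> by auto
      qed
    next
      case (ins r)
      from c2 show ?thesis
      proof (cases rule: cov_E)
        case (del p)
        have "A p \<in> set u" using \<open>A p \<in> set v\<close> \<open>u = removeAll (X r) v\<close> by simp
        then show ?thesis using uw \<open>w = removeAll (A p) v\<close> by auto
      next
        case (ins s)
        have "X s \<notin> set u" using \<open>u = removeAll (X r) v\<close> \<open>v = removeAll (X s) w\<close> by simp
        then have "s = i \<or> s = j" using \<open>X s \<in> set w\<close> e by auto
        then show ?thesis using \<open>v = removeAll (X s) w\<close> by auto
      qed
    qed
  qed
next
  have c1: "cov M N u (removeAll (X j) w)"
    using cov_ins[OF sw_rem[OF sw], where k=i] xi ij e by simp
  have c2: "cov M N (removeAll (X j) w) w" using cov_ins[OF sw xj] by simp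
  have e2: "u = removeAll (X j) (removeAll (X i) w)" using e removeAll_comm by metis
  have "X j \<in> set (removeAll (X i) w)" using xj ij by simp
  then have c3: "cov M N u (removeAll (X i) w)"
    using cov_ins[OF sw_rem[OF sw, of "X i"]] e2 by simp
  have c4: "cov M N (removeAll (X i) w) w" using cov_ins[OF sw xi] by simp
  show "{removeAll (X j) w, removeAll (X i) w} \<subseteq> middles M N u w"
    using c1 c2 c3 c4 by (simp add: middles_def)
qed

definition GOAL :: "nat \<Rightarrow> nat \<Rightarrow> letter list \<Rightarrow> letter list \<Rightarrow> letter list list \<Rightarrow> letter list list \<Rightarrow> bool" where
  "GOAL M N u w lo hi \<longleftrightarrow> (ord_iso (interval M N u w) (wle M N) UNIV C2xC2_le \<and>
          (\<exists>v1 v2 l1 l2. middles M N u w = {v1, v2} \<and> v1 \<noteq> v2 \<and>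
             l1 \<in> alphabet M N \<and> l2 \<in> alphabet M N \<and> l1 \<noteq> l2 \<and>
             ind_labels lo v1 hi = (l1, l2) \<and> ind_labels lo v2 hi = (l2, l1)))
       \<or> (ord_iso (interval M N u w) (wle M N) Pi3 refines \<and>
          (\<exists>g1 g2 g3 j l. middles M N u w = {g1, g2, g3} \<and> distinct [g1, g2, g3] \<and>
             X j \<in> alphabet M N \<and> l \<in> alphabet M N - {X j} \<and>
             ind_labels lo g1 hi = (X j, l) \<and> ind_labels lo g2 hi = (l, X j) \<and>
             ind_labels lo g3 hi = (X j, X j)))"

lemma C2_goal:
  assumes "rank_two M N u w" "middles M N u w = {v1, v2}" "v1 \<noteq> v2"
    "l1 \<in> alphabet M N" "l2 \<in> alphabet M N" "l1 \<noteq> l2"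
    "ind_labels lo v1 hi = (l1, l2)" "ind_labels lo v2 hi = (l2, l1)"
  shows "GOAL M N u w lo hi"
  unfolding GOAL_def using iso_C2[OF assms(1-3)] assms(2-8) by blast

lemma Pi3_goal:
  assumes "rank_two M N u w" "middles M N u w = {g1, g2, g3}" "distinct [g1, g2, g3]"
    "X j \<in> alphabet M N" "l \<in> alphabet M N - {X j}"
    "ind_labels lo g1 hi = (X j, l)" "ind_labels lo g2 hi = (l, X j)" "ind_labels lo g3 hi = (X j, X j)"
  shows "GOAL M N u w lo hi"
  unfolding GOAL_def using iso_Pi3[OF assms(1-3)] assms(2-8) by blast

lemma sw_alpha: "shuffle_word M N x \<Longrightarrow> a \<in> set x \<Longrightarrow> a \<in> alphabet M N"
  by (auto simp: shuffle_word_def)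

lemma case_DD:
  assumes lo: "chain_ft M N lo (bottom M) u" and hi: "chain_ft M N hi w (top_word N)"
    and r: "rank_two M N u w" and su: "shuffle_word M N u" and sw: "shuffle_word M N w"
    and am: "A m \<in> set u" and an1: "A n \<in> set (removeAll (A m) u)" and e: "w = removeAll (A n) (removeAll (A m) u)"
  shows "GOAL M N u w lo hi"
proof -
  have mn: "m \<noteq> n" using an1 by auto
  have an: "A n \<in> set u" using an1 by simp
  define v1 where "v1 = removeAll (A m) u"
  define v2 where "v2 = removeAll (A n) u"
  have mid: "middles M N u w = {v1, v2}" unfolding v1_def v2_def by (rule mid_DD[OF su sw am an mn e])
  have ne: "v1 \<noteq> v2"
  proof
    assume "v1 = v2"
    then have "A n \<in> set v2" using an1 by (simp add: v1_def)
    then show False by (simp add: v2_def)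
  qed
  have du: "distinct u" using su sw_distinct by blast
  have dv1: "distinct v1" and dv2: "distinct v2" using du by (auto simp: v1_def v2_def distinct_removeAll)
  have am2: "A m \<in> set v2" using am mn by (simp add: v2_def)
  have e2: "w = removeAll (A m) v2" using e removeAll_comm unfolding v2_def by metis
  have L1: "ind_labels lo v1 hi = (lab1 lo u (A m), lab2 lo u (A m) v1 (A n))"
    unfolding ind_eq[OF lo hi]
    using step1_del[OF lo hi am du v1_def] step2_del_after_del[OF lo hi am v1_def an1[folded v1_def] dv1 e[folded v1_def]]
    by simp
  have L2: "ind_labels lo v2 hi = (lab1 lo u (A n), lab2 lo u (A n) v2 (A m))"
    unfolding ind_eq[OF lo hi]
    using step1_del[OF lo hi an du v2_def] step2_del_after_del[OF lo hi an v2_def am2 dv2 e2]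
    by simp
  have s1: "lab1 lo u (A m) = lab2 lo u (A n) v2 (A m)" unfolding v2_def by (rule DD_swap[OF du am an mn])
  have s2: "lab1 lo u (A n) = lab2 lo u (A m) v1 (A n)" unfolding v1_def using DD_swap[OF du an am] mn by simp
  have a1: "lab1 lo u (A m) \<in> alphabet M N" using lab1_in[OF am du] sw_alpha[OF su] by blast
  have a2: "lab1 lo u (A n) \<in> alphabet M N" using lab1_in[OF an du] sw_alpha[OF su] by blast
  have d12: "lab1 lo u (A m) \<noteq> lab1 lo u (A n)"
  proof -
    have c1: "lab1 lo u (A m) = A m \<or> (\<exists>l. imm_after u l (A m) \<and> lab1 lo u (A m) = X l)" using lab1_cases[OF du] .
    have c2: "lab1 lo u (A n) = A n \<or> (\<exists>l. imm_after u l (A n) \<and> lab1 lo u (A n) = X l)" using lab1_cases[OF du] .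
    show ?thesis using c1 c2 mn I1[OF du, of _ "A m" "A n"] by auto
  qed
  show ?thesis
    using C2_goal[OF r mid ne a1 a2 d12] L1 L2 s1 s2 by simp
qed

lemma case_II:
  assumes lo: "chain_ft M N lo (bottom M) u" and hi: "chain_ft M N hi w (top_word N)"
    and r: "rank_two M N u w" and su: "shuffle_word M N u" and sw: "shuffle_word M N w"
    and xi1: "X i \<in> set (removeAll (X j) w)" and xj: "X j \<in> set w" and e: "u = removeAll (X i) (removeAll (X j) w)"
  shows "GOAL M N u w lo hi"
proof -
  have ij: "i \<noteq> j" using xi1 by auto
  have xi: "X i \<in> set w" using xi1 by simp
  define v1 where "v1 = removeAll (X j) w"
  define v2 where "v2 = removeAll (X i) w"
  have mid: "middles M N u w = {v1, v2}" unfolding v1_def v2_def by (rule mid_II[OF su sw xi xj ij e])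
  have ne: "v1 \<noteq> v2"
  proof
    assume "v1 = v2"
    then have "X i \<in> set v2" using xi1 by (simp add: v1_def)
    then show False by (simp add: v2_def)
  qed
  have xj2: "X j \<in> set v2" using xj ij by (simp add: v2_def)
  have e2: "u = removeAll (X j) v2" using e removeAll_comm unfolding v2_def by metis
  have L1: "ind_labels lo v1 hi = (X i, X j)"
    unfolding ind_eq[OF lo hi]
    using step1_ins[OF lo hi xi1[folded v1_def] e[folded v1_def]] step2_ins[OF lo hi xj v1_def] by simp
  have L2: "ind_labels lo v2 hi = (X j, X i)"
    unfolding ind_eq[OF lo hi]
    using step1_ins[OF lo hi xj2 e2] step2_ins[OF lo hi xi v2_def] by simp
  have a1: "X i \<in> alphabet M N" using sw_alpha[OF sw xi] .
  have a2: "X j \<in> alphabet M N" using sw_alpha[OF sw xj] .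
  show ?thesis using C2_goal[OF r mid ne a1 a2 _ L1 L2] ij by simp
qed

lemma lab1_cong: "(\<And>l. imm_after x l d \<longleftrightarrow> imm_after y l d) \<Longrightarrow> lab1 lo x d = lab1 lo y d"
proof -
  assume h: "\<And>l. imm_after x l d \<longleftrightarrow> imm_after y l d"
  show ?thesis unfolding lab1_def by (simp only: h)
qed

lemma case_mixed:
  assumes lo: "chain_ft M N lo (bottom M) u" and hi: "chain_ft M N hi w (top_word N)"
    and r: "rank_two M N u w" and su: "shuffle_word M N u" and sw: "shuffle_word M N w"
    and am: "A m \<in> set u" and xk: "X k \<in> set w" and nx: "X k \<notin> set u" and na: "A m \<notin> set w"
    and e: "removeAll (A m) u = removeAll (X k) w"
  shows "GOAL M N u w lo hi"
proof -
  have du: "distinct u" and dw: "distinct w" using su sw sw_distinct by auto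
  define b where "b = removeAll (A m) u"
  define l where "l = lab1 lo u (A m)"
  have mid: "middles M N u w = insert b {v. IDm M N u w k m v}"
    unfolding b_def by (rule mid_mixed[OF su sw am xk nx na e])
  have Lb: "ind_labels lo b hi = (l, X k)"
    unfolding ind_eq[OF lo hi] l_def
    using step1_del[OF lo hi am du b_def] step2_ins[OF lo hi xk, of b] e b_def by simp
  have Lv: "ind_labels lo v hi = (X k, lab1 lo v (A m))" if iv: "IDm M N u w k m v" for v
  proof -
    have i: "shuffle_word M N v" "X k \<in> set v" "u = removeAll (X k) v" "w = removeAll (A m) v"
      using iv by (auto simp: IDm_def)
    have amv: "A m \<in> set v" using am i(3) by auto
    have dv: "distinct v" using i(1) sw_distinct by blast
    show ?thesis unfolding ind_eq[OF lo hi]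
      using step1_ins[OF lo hi i(2,3)] step2_del_after_ins[OF lo hi amv dv i(4) i(2,3)] by simp
  qed
  have lv_eq: "lab1 lo v (A m) = l" if iv: "IDm M N u w k m v" and ni: "\<not> imm_after v k (A m)" for v
  proof -
    have i: "shuffle_word M N v" "X k \<in> set v" "u = removeAll (X k) v" "w = removeAll (A m) v"
      using iv by (auto simp: IDm_def)
    have dv: "distinct v" using i(1) sw_distinct by blast
    show ?thesis unfolding l_def
      by (rule lab1_cong) (rule I5[OF dv i(3) ni], simp)
  qed
  have la: "l \<in> alphabet M N" unfolding l_def using lab1_in[OF am du] sw_alpha[OF su] by blast
  have lk: "l \<noteq> X k"
  proof -
    have "l = A m \<or> (\<exists>l'. imm_after u l' (A m) \<and> l = X l')" unfolding l_def using lab1_cases[OF du] .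
    then show ?thesis using imm_set nx by auto
  qed
  have xa: "X k \<in> alphabet M N" using sw_alpha[OF sw xk] .
  have bX: "X k \<notin> set b" using nx by (simp add: b_def)
  have nb: "\<not> IDm M N u w k m b" using bX by (auto simp: IDm_def)
  show ?thesis
  proof (cases "\<exists>p q. u = p @ A m # q \<and> w = p @ X k # q")
    case True
    then obtain p q where u: "u = p @ A m # q" and w: "w = p @ X k # q" by blast
    define g1 where "g1 = p @ A m # X k # q"
    define g3 where "g3 = p @ X k # A m # q"
    have n1: "X k \<notin> set p" "X k \<notin> set q" using nx u by auto
    have n2: "A m \<notin> set p" "A m \<notin> set q" using du u by auto
    have dg1: "distinct g1" using du u n1 by (auto simp: g1_def)
    have dg3: "distinct g3" using du u n1 by (auto simp: g3_def)
    have r1: "u = removeAll (X k) g1" "w = removeAll (A m) g1" using u w n1 n2 by (auto simp: g1_def removeAll_id)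
    have r3: "u = removeAll (X k) g3" "w = removeAll (A m) g3" using u w n1 n2 by (auto simp: g3_def removeAll_id)
    have I1': "IDm M N u w k m g1" unfolding IDm_def using sw_mid[OF su sw dg1 r1] r1 by (simp add: g1_def)
    have I3': "IDm M N u w k m g3" unfolding IDm_def using sw_mid[OF su sw dg3 r3] r3 by (simp add: g3_def)
    have S: "{v. IDm M N u w k m v} = {g1, g3}"
    proof
      show "{g1, g3} \<subseteq> {v. IDm M N u w k m v}" using I1' I3' by auto
      show "{v. IDm M N u w k m v} \<subseteq> {g1, g3}"
      proof
        fix v assume "v \<in> {v. IDm M N u w k m v}"
        then have iv: "IDm M N u w k m v" by simp
        show "v \<in> {g1, g3}"
        proof (cases "v = g1")
          case True then show ?thesis by simp
        next
          case False
          obtain p2 q2 where pq2: "u = p2 @ A m # q2" "w = p2 @ X k # q2"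
            "(v = p2 @ X k # A m # q2 \<and> g1 = p2 @ A m # X k # q2) \<or> (v = p2 @ A m # X k # q2 \<and> g1 = p2 @ X k # A m # q2)"
            using uniq[OF du dw nx iv I1' False] by blast
          have "A m \<notin> set p" "A m \<notin> set q" using n2 by auto
          then have "p2 = p \<and> q2 = q" using pq2(1) u append_Cons_eq_iff by metis
          then show ?thesis using pq2(3) by (auto simp: g1_def g3_def)
        qed
      qed
    qed
    have mid3: "middles M N u w = {g1, b, g3}" using mid S by auto
    have dist: "distinct [g1, b, g3]"
    proof -
      have "g1 \<noteq> b" "g3 \<noteq> b" using bX by (auto simp: g1_def g3_def)
      moreover have "g1 \<noteq> g3" by (simp add: g1_def g3_def)
      ultimately show ?thesis by auto
    qed
    have ni1: "\<not> imm_after g1 k (A m)"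
    proof
      assume "imm_after g1 k (A m)"
      then obtain p' q' where h: "g1 = p' @ X k # A m # q'" by (auto simp: imm_iff)
      have "(p @ [A m]) @ X k # q = p' @ X k # (A m # q')" using h by (simp add: g1_def)
      moreover have "X k \<notin> set (p @ [A m])" "X k \<notin> set q" using n1 by auto
      ultimately have "q = A m # q'" using append_Cons_eq_iff by metis
      then show False using n2 by simp
    qed
    have L1: "ind_labels lo g1 hi = (X k, l)" using Lv[OF I1'] lv_eq[OF I1' ni1] by simp
    have imm3: "imm_after g3 k (A m)" using imm_intro[of g3 p k "A m" q] by (simp add: g3_def)
    have nH: "\<not> H lo k" using H_in_u[OF lo hi] nx by blast
    have L3: "ind_labels lo g3 hi = (X k, X k)" using Lv[OF I3'] lab1_X[OF dg3 imm3 nH] by simp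
    have "l \<in> alphabet M N - {X k}" using la lk by simp
    then show ?thesis using Pi3_goal[OF r mid3 dist xa _ L1 Lb L3] by simp
  next
    case False
    obtain v where iv: "IDm M N u w k m v" using exist_ID[OF su sw am xk nx e] by blast
    have S: "{v. IDm M N u w k m v} = {v}"
    proof
      show "{v} \<subseteq> {v. IDm M N u w k m v}" using iv by simp
      show "{v. IDm M N u w k m v} \<subseteq> {v}"
      proof
        fix v' assume "v' \<in> {v. IDm M N u w k m v}"
        then have iv': "IDm M N u w k m v'" by simp
        show "v' \<in> {v}"
        proof (rule ccontr)
          assume "v' \<notin> {v}"
          then have "v \<noteq> v'" by simp
          then show False using uniq[OF du dw nx iv iv'] False by blast
        qed
      qed
    qed
    have mid2: "middles M N u w = {b, v}" using mid S by auto
    have ne: "b \<noteq> v" using nb iv by auto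
    have i: "shuffle_word M N v" "X k \<in> set v" "u = removeAll (X k) v" "w = removeAll (A m) v"
      using iv by (auto simp: IDm_def)
    have dv: "distinct v" using i(1) sw_distinct by blast
    have ni: "\<not> imm_after v k (A m)"
    proof
      assume "imm_after v k (A m)"
      then obtain p q where h: "v = p @ X k # A m # q" by (auto simp: imm_iff)
      have n1: "X k \<notin> set p" "X k \<notin> set q" "A m \<notin> set p" "A m \<notin> set q" using dv h by auto
      have "u = p @ A m # q" using i(3) h n1 by (simp add: removeAll_id)
      moreover have "w = p @ X k # q" using i(4) h n1 by (simp add: removeAll_id)
      ultimately show False using False by blast
    qed
    have L2: "ind_labels lo v hi = (X k, l)" using Lv[OF iv] lv_eq[OF iv ni] by simp
    show ?thesis using C2_goal[OF r mid2 ne la xa lk Lb L2] .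
  qed
qed

theorem lemma3p2:
  fixes M N :: nat and u w :: "letter list" and lo hi :: "letter list list"
  assumes "rank_two M N u w"
    and "chain_ft M N lo (bottom M) u"
    and "chain_ft M N hi w (top_word N)"
  shows "(ord_iso (interval M N u w) (wle M N) UNIV C2xC2_le \<and>
          (\<exists>v1 v2 l1 l2. middles M N u w = {v1, v2} \<and> v1 \<noteq> v2 \<and>
             l1 \<in> alphabet M N \<and> l2 \<in> alphabet M N \<and> l1 \<noteq> l2 \<and>
             ind_labels lo v1 hi = (l1, l2) \<and> ind_labels lo v2 hi = (l2, l1)))
       \<or> (ord_iso (interval M N u w) (wle M N) Pi3 refines \<and>
          (\<exists>g1 g2 g3 j l. middles M N u w = {g1, g2, g3} \<and> distinct [g1, g2, g3] \<and>
             X j \<in> alphabet M N \<and> l \<in> alphabet M N - {X j} \<and>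
             ind_labels lo g1 hi = (X j, l) \<and> ind_labels lo g2 hi = (l, X j) \<and>
             ind_labels lo g3 hi = (X j, X j)))"
proof -
  note r = assms(1) and lo = assms(2) and hi = assms(3)
  obtain v0 where c1: "cov M N u v0" and c2: "cov M N v0 w" using r by (auto simp: rank_two_def)
  have su: "shuffle_word M N u" and sv: "shuffle_word M N v0" and sw: "shuffle_word M N w"
    using c1 c2 cov_sw by blast+
  have "GOAL M N u w lo hi"
  proof -
    from c1 show ?thesis
    proof (cases rule: cov_E)
      case (del m)
      note am = \<open>A m \<in> set u\<close> and e1 = \<open>v0 = removeAll (A m) u\<close>
      from c2 show ?thesis
      proof (cases rule: cov_E)
        case (del n)
        show ?thesis using case_DD[OF lo hi r su sw am] del e1 by simp
      next
        case (ins k)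
        note xk = \<open>X k \<in> set w\<close> and e2 = \<open>v0 = removeAll (X k) w\<close>
        have eq: "removeAll (A m) u = removeAll (X k) w" using e1 e2 by simp
        have nx: "X k \<notin> set u"
        proof
          assume "X k \<in> set u"
          then have "X k \<in> set (removeAll (X k) w)" using eq[symmetric] by simp
          then show False by simp
        qed
        have na: "A m \<notin> set w"
        proof
          assume "A m \<in> set w"
          then have "A m \<in> set (removeAll (A m) u)" using eq by simp
          then show False by simp
        qed
        show ?thesis by (rule case_mixed[OF lo hi r su sw am xk nx na eq])
      qed
    next
      case (ins k)
      note xk0 = \<open>X k \<in> set v0\<close> and e1 = \<open>u = removeAll (X k) v0\<close>
      from c2 show ?thesis
      proof (cases rule: cov_E)
        case (del m)
        note am0 = \<open>A m \<in> set v0\<close> and e2 = \<open>w = removeAll (A m) v0\<close>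
        have am: "A m \<in> set u" using am0 e1 by simp
        have xk: "X k \<in> set w" using xk0 e2 by simp
        have nx: "X k \<notin> set u" using e1 by simp
        have na: "A m \<notin> set w" using e2 by simp
        have eq: "removeAll (A m) u = removeAll (X k) w" using e1 e2 removeAll_comm by metis
        show ?thesis by (rule case_mixed[OF lo hi r su sw am xk nx na eq])
      next
        case (ins j)
        show ?thesis using case_II[OF lo hi r su sw] ins e1 xk0 by simp
      qed
    qed
  qed
  then show ?thesis unfolding GOAL_def .
qed

end
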